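(* Let $\{M_i\mid i\in I\}$ be a collection of monoids. Then the monoid free product $F=\prod_1^{*}\{M_i\mid i\in I\}$ is finitely right equated if and only if each $M_i$ ($i\in I$) is finitely right equated.
   Context: For a semigroup $S$ and $a\in S$, $\mathbf{r}_S(a)=\{(s,t)\in S\times S\mid as=at\}$ is the right annihilator congruence of $a$. $S$ is finitely right equated (FRE) if each $\mathbf{r}_S(a)$ is finitely generated as a right congruence, i.e. equals the smallest right congruence containing some finite subset. For pairwise disjoint monoids $M_i$ with identities $1_i$, the monoid free product is the quotient of the semigroup free product $\prod^{*}\{M_i\}$ (sequences $s_1*\dots*s_n$ with $s_j\in\bigsqcup M_i$, consecutive entries from different factors, multiplied by concatenation and multiplying adjacent entries from the same factor) by the congruence generated by $\{(1_i,1_j)\mid i,j\in I\}$. *)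

theory Defs
  imports "HOL-Algebra.Group"
begin

definition right_congruence :: "'a set \<Rightarrow> ('a \<Rightarrow> 'a \<Rightarrow> 'a) \<Rightarrow> ('a \<times> 'a) set \<Rightarrow> bool" where
  "right_congruence S f \<rho> \<longleftrightarrow> equiv S \<rho> \<and>
     (\<forall>s t u. (s, t) \<in> \<rho> \<longrightarrow> u \<in> S \<longrightarrow> (f s u, f t u) \<in> \<rho>)"

definition right_cong_gen :: "'a set \<Rightarrow> ('a \<Rightarrow> 'a \<Rightarrow> 'a) \<Rightarrow> ('a \<times> 'a) set \<Rightarrow> ('a \<times> 'a) set" where
  "right_cong_gen S f X = \<Inter>{\<rho>. right_congruence S f \<rho> \<and> X \<subseteq> \<rho>}"

definition right_annihilator :: "'a set \<Rightarrow> ('a \<Rightarrow> 'a \<Rightarrow> 'a) \<Rightarrow> 'a \<Rightarrow> ('a \<times> 'a) set" where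
  "right_annihilator S f a = {(s, t). s \<in> S \<and> t \<in> S \<and> f a s = f a t}"

definition fin_right_equated :: "'a set \<Rightarrow> ('a \<Rightarrow> 'a \<Rightarrow> 'a) \<Rightarrow> bool" where
  "fin_right_equated S f \<longleftrightarrow>
     (\<forall>a \<in> S. \<exists>X. finite X \<and> X \<subseteq> S \<times> S \<and> right_cong_gen S f X = right_annihilator S f a)"

abbreviation FRE :: "('a, 'b) monoid_scheme \<Rightarrow> bool" where
  "FRE M \<equiv> fin_right_equated (carrier M) (mult M)"

text \<open>The factors are made pairwise disjoint by tagging each element with its index.
  An element of the semigroup free product is a nonempty word
  s_1 * ... * s_n, represented as a list of (index, element) pairs, with consecutive
  entries from different factors.\<close>

definition sg_free_prod_carrier :: "'i set \<Rightarrow> ('i \<Rightarrow> ('a, 'b) monoid_scheme) \<Rightarrow> ('i \<times> 'a) list set" where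
  "sg_free_prod_carrier I M =
     {w. w \<noteq> [] \<and> (\<forall>(i, a) \<in> set w. i \<in> I \<and> a \<in> carrier (M i)) \<and>
         (\<forall>k. Suc k < length w \<longrightarrow> fst (w ! k) \<noteq> fst (w ! Suc k))}"

definition sg_free_prod_mult :: "('i \<Rightarrow> ('a, 'b) monoid_scheme) \<Rightarrow> ('i \<times> 'a) list \<Rightarrow> ('i \<times> 'a) list \<Rightarrow> ('i \<times> 'a) list" where
  "sg_free_prod_mult M u v =
     (if fst (last u) = fst (hd v)
      then butlast u @ [(fst (last u), snd (last u) \<otimes>\<^bsub>M (fst (last u))\<^esub> snd (hd v))] @ tl v
      else u @ v)"

definition semigroup_congruence :: "'a set \<Rightarrow> ('a \<Rightarrow> 'a \<Rightarrow> 'a) \<Rightarrow> ('a \<times> 'a) set \<Rightarrow> bool" where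
  "semigroup_congruence S f \<theta> \<longleftrightarrow> equiv S \<theta> \<and>
     (\<forall>s t u. (s, t) \<in> \<theta> \<longrightarrow> u \<in> S \<longrightarrow> (f s u, f t u) \<in> \<theta> \<and> (f u s, f u t) \<in> \<theta>)"

definition cong_gen :: "'a set \<Rightarrow> ('a \<Rightarrow> 'a \<Rightarrow> 'a) \<Rightarrow> ('a \<times> 'a) set \<Rightarrow> ('a \<times> 'a) set" where
  "cong_gen S f X = \<Inter>{\<theta>. semigroup_congruence S f \<theta> \<and> X \<subseteq> \<theta>}"

definition free_prod_cong :: "'i set \<Rightarrow> ('i \<Rightarrow> ('a, 'b) monoid_scheme) \<Rightarrow> (('i \<times> 'a) list \<times> ('i \<times> 'a) list) set" where
  "free_prod_cong I M =
     cong_gen (sg_free_prod_carrier I M) (sg_free_prod_mult M)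
       {([(i, \<one>\<^bsub>M i\<^esub>)], [(j, \<one>\<^bsub>M j\<^esub>)]) | i j. i \<in> I \<and> j \<in> I}"

definition monoid_free_prod :: "'i set \<Rightarrow> ('i \<Rightarrow> ('a, 'b) monoid_scheme) \<Rightarrow> ('i \<times> 'a) list set monoid" where
  "monoid_free_prod I M =
     \<lparr> carrier = sg_free_prod_carrier I M // free_prod_cong I M,
       mult = (\<lambda>A B. free_prod_cong I M ``
                       {sg_free_prod_mult M (SOME u. u \<in> A) (SOME v. v \<in> B)}),
       one = free_prod_cong I M `` {[(SOME i. i \<in> I, \<one>\<^bsub>M (SOME i. i \<in> I)\<^esub>)]} \<rparr>"

end

theory Submission
  imports Defs
begin

lemma rcg_upper: "X \<subseteq> right_cong_gen S f X"
  unfolding right_cong_gen_def by blast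

lemma rcg_least: "right_congruence S f \<rho> \<Longrightarrow> X \<subseteq> \<rho> \<Longrightarrow> right_cong_gen S f X \<subseteq> \<rho>"
  unfolding right_cong_gen_def by blast

lemma rcg_mono: "X \<subseteq> Y \<Longrightarrow> right_cong_gen S f X \<subseteq> right_cong_gen S f Y"
  unfolding right_cong_gen_def by blast

lemma rc_full: "\<forall>x\<in>S. \<forall>y\<in>S. f x y \<in> S \<Longrightarrow> right_congruence S f (S \<times> S)"
  unfolding right_congruence_def equiv_def refl_on_def sym_def trans_def by blast

lemma rc_Id: "\<forall>x\<in>S. \<forall>y\<in>S. f x y \<in> S \<Longrightarrow> right_congruence S f (Id_on S)"
  unfolding right_congruence_def equiv_def refl_on_def sym_def trans_def by blast

lemma rc_props:
  assumes "right_congruence S f \<rho>"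
  shows "\<rho> \<subseteq> S \<times> S" "x \<in> S \<Longrightarrow> (x,x) \<in> \<rho>" "(x,y) \<in> \<rho> \<Longrightarrow> (y,x) \<in> \<rho>"
    "(x,y) \<in> \<rho> \<Longrightarrow> (y,z) \<in> \<rho> \<Longrightarrow> (x,z) \<in> \<rho>"
    "(x,y) \<in> \<rho> \<Longrightarrow> u \<in> S \<Longrightarrow> (f x u, f y u) \<in> \<rho>"
  using assms unfolding right_congruence_def equiv_def refl_on_def sym_def trans_def by blast+

lemma rc_intro:
  assumes "\<rho> \<subseteq> S \<times> S" "\<And>x. x \<in> S \<Longrightarrow> (x,x) \<in> \<rho>" "\<And>x y. (x,y) \<in> \<rho> \<Longrightarrow> (y,x) \<in> \<rho>"
    "\<And>x y z. (x,y) \<in> \<rho> \<Longrightarrow> (y,z) \<in> \<rho> \<Longrightarrow> (x,z) \<in> \<rho>"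
    "\<And>x y u. (x,y) \<in> \<rho> \<Longrightarrow> u \<in> S \<Longrightarrow> (f x u, f y u) \<in> \<rho>"
  shows "right_congruence S f \<rho>"
  using assms unfolding right_congruence_def equiv_def refl_on_def sym_def trans_def by blast

lemma rcg_rc:
  assumes cl: "\<forall>x\<in>S. \<forall>y\<in>S. f x y \<in> S" and X: "X \<subseteq> S \<times> S"
  shows "right_congruence S f (right_cong_gen S f X)"
proof -
  let ?F = "{\<rho>. right_congruence S f \<rho> \<and> X \<subseteq> \<rho>}"
  have ne: "S \<times> S \<in> ?F" using rc_full[OF cl] X by blast
  have e: "right_cong_gen S f X = \<Inter>?F" unfolding right_cong_gen_def ..
  show ?thesis unfolding e
  proof (rule rc_intro)
    show "\<Inter>?F \<subseteq> S \<times> S" using ne by blast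
    show "\<And>x. x \<in> S \<Longrightarrow> (x, x) \<in> \<Inter>?F"
      by (auto intro: rc_props(2))
    show "\<And>x y. (x, y) \<in> \<Inter>?F \<Longrightarrow> (y, x) \<in> \<Inter>?F"
      by (auto intro: rc_props(3))
    show "\<And>x y z. (x, y) \<in> \<Inter>?F \<Longrightarrow> (y, z) \<in> \<Inter>?F \<Longrightarrow> (x, z) \<in> \<Inter>?F"
    proof -
      fix x y z assume A: "(x, y) \<in> \<Inter>?F" "(y, z) \<in> \<Inter>?F"
      show "(x, z) \<in> \<Inter>?F"
      proof
        fix \<rho> assume "\<rho> \<in> ?F"
        then have "right_congruence S f \<rho>" "(x,y) \<in> \<rho>" "(y,z) \<in> \<rho>" using A by auto
        then show "(x, z) \<in> \<rho>" using rc_props(4) by metis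
      qed
    qed
    show "\<And>s t u. (s, t) \<in> \<Inter>?F \<Longrightarrow> u \<in> S \<Longrightarrow> (f s u, f t u) \<in> \<Inter>?F"
      by (auto intro: rc_props(5))
  qed
qed

lemma ann_rc:
  assumes cl: "\<forall>x\<in>S. \<forall>y\<in>S. f x y \<in> S"
    and as: "\<forall>x\<in>S. \<forall>y\<in>S. \<forall>z\<in>S. f (f x y) z = f x (f y z)" and a: "a \<in> S"
  shows "right_congruence S f (right_annihilator S f a)"
proof (rule rc_intro)
  show "right_annihilator S f a \<subseteq> S \<times> S" unfolding right_annihilator_def by auto
next
  fix x y u assume "(x, y) \<in> right_annihilator S f a" "u \<in> S"
  then show "(f x u, f y u) \<in> right_annihilator S f a"
  proof -
    have xy: "x \<in> S" "y \<in> S" "f a x = f a y" using \<open>(x, y) \<in> right_annihilator S f a\<close>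
      unfolding right_annihilator_def by auto
    have "f a (f x u) = f (f a x) u" using as a xy(1) \<open>u \<in> S\<close> by (metis (no_types))
    also have "\<dots> = f (f a y) u" using xy by simp
    also have "\<dots> = f a (f y u)" using as a xy(2) \<open>u \<in> S\<close> by (metis (no_types))
    finally have "f a (f x u) = f a (f y u)" .
    moreover have "f x u \<in> S" "f y u \<in> S" using cl xy \<open>u \<in> S\<close> by auto
    ultimately show ?thesis unfolding right_annihilator_def by blast
  qed
qed (auto simp: right_annihilator_def)

lemma rc_preimage:
  assumes rc: "right_congruence T g \<rho>"
    and h: "\<forall>x\<in>S. h x \<in> T" and hom: "\<forall>x\<in>S. \<forall>y\<in>S. h (f x y) = g (h x) (h y)"
    and cl: "\<forall>x\<in>S. \<forall>y\<in>S. f x y \<in> S"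
  shows "right_congruence S f {(x,y). x \<in> S \<and> y \<in> S \<and> (h x, h y) \<in> \<rho>}"
proof (rule rc_intro)
  fix x y z assume "(x, y) \<in> {(x,y). x \<in> S \<and> y \<in> S \<and> (h x, h y) \<in> \<rho>}"
    "(y, z) \<in> {(x,y). x \<in> S \<and> y \<in> S \<and> (h x, h y) \<in> \<rho>}"
  then have "x \<in> S" "z \<in> S" "(h x, h y) \<in> \<rho>" "(h y, h z) \<in> \<rho>" by auto
  then show "(x, z) \<in> {(x,y). x \<in> S \<and> y \<in> S \<and> (h x, h y) \<in> \<rho>}"
    using rc_props(4)[OF rc] by blast
next
  fix x y u assume "(x, y) \<in> {(x,y). x \<in> S \<and> y \<in> S \<and> (h x, h y) \<in> \<rho>}" "u \<in> S"
  then have xy: "x \<in> S" "y \<in> S" "(h x, h y) \<in> \<rho>" by auto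
  then have "(g (h x) (h u), g (h y) (h u)) \<in> \<rho>" using rc_props(5)[OF rc] h \<open>u \<in> S\<close> by blast
  moreover have "h (f x u) = g (h x) (h u)" "h (f y u) = g (h y) (h u)" "f x u \<in> S" "f y u \<in> S"
    using hom cl xy \<open>u \<in> S\<close> by auto
  ultimately show "(f x u, f y u) \<in> {(x,y). x \<in> S \<and> y \<in> S \<and> (h x, h y) \<in> \<rho>}" by simp
next
  fix x y assume "(x, y) \<in> {(x,y). x \<in> S \<and> y \<in> S \<and> (h x, h y) \<in> \<rho>}"
  then show "(y, x) \<in> {(x,y). x \<in> S \<and> y \<in> S \<and> (h x, h y) \<in> \<rho>}"
    using rc_props(3)[OF rc] by blast
next
  fix x assume "x \<in> S" then show "(x, x) \<in> {(x,y). x \<in> S \<and> y \<in> S \<and> (h x, h y) \<in> \<rho>}"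
    using rc_props(2)[OF rc] h by blast
qed auto



lemma rcg_image:
  assumes bij: "bij_betw h S T" and hom: "\<forall>x\<in>S. \<forall>y\<in>S. h (f x y) = g (h x) (h y)"
    and cl: "\<forall>x\<in>S. \<forall>y\<in>S. f x y \<in> S" and X: "X \<subseteq> S \<times> S"
  shows "right_cong_gen T g ((\<lambda>(a,b). (h a, h b)) ` X) = (\<lambda>(a,b). (h a, h b)) ` (right_cong_gen S f X)"
proof -
  let ?H = "\<lambda>R. (\<lambda>(a,b). (h a, h b)) ` R"
  have hS: "\<forall>x\<in>S. h x \<in> T" using bij unfolding bij_betw_def by blast
  have inj: "inj_on h S" using bij unfolding bij_betw_def by blast
  have imS: "h ` S = T" using bij unfolding bij_betw_def by blast
  have clT: "\<forall>x\<in>T. \<forall>y\<in>T. g x y \<in> T"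
  proof (intro ballI)
    fix x y assume "x \<in> T" "y \<in> T"
    then obtain a b where "a \<in> S" "b \<in> S" "x = h a" "y = h b" using imS by blast
    then show "g x y \<in> T" using hom cl hS by metis
  qed
  let ?R = "right_cong_gen S f X"
  have rcR: "right_congruence S f ?R" using rcg_rc[OF cl X] .
  have RS: "?R \<subseteq> S \<times> S" using rc_props(1)[OF rcR] .
  have "right_congruence T g (?H ?R)"
  proof (rule rc_intro)
    show "?H ?R \<subseteq> T \<times> T" using RS hS by auto
  next
    fix x assume "x \<in> T"
    then obtain a where "a \<in> S" "x = h a" using imS by blast
    then show "(x,x) \<in> ?H ?R" using rc_props(2)[OF rcR] by force
  next
    fix x y assume "(x,y) \<in> ?H ?R"
    then obtain a b where "(a,b) \<in> ?R" "x = h a" "y = h b" by auto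
    then show "(y,x) \<in> ?H ?R" using rc_props(3)[OF rcR] by force
  next
    fix x y z assume "(x,y) \<in> ?H ?R" "(y,z) \<in> ?H ?R"
    then obtain a b b' c where ab: "(a,b) \<in> ?R" "x = h a" "y = h b" and bc: "(b',c) \<in> ?R" "y = h b'" "z = h c"
      by auto
    then have "b = b'" using inj RS unfolding inj_on_def by blast
    then have "(a,c) \<in> ?R" using ab bc rc_props(4)[OF rcR] by blast
    then show "(x,z) \<in> ?H ?R" using ab bc by force
  next
    fix x y u assume "(x,y) \<in> ?H ?R" "u \<in> T"
    then obtain a b c where "(a,b) \<in> ?R" "x = h a" "y = h b" "c \<in> S" "u = h c" using imS by auto
    moreover then have fR: "(f a c, f b c) \<in> ?R" using rc_props(5)[OF rcR] by blast
    moreover have "a \<in> S" "b \<in> S" using calculation RS by auto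
    ultimately have eq: "(g x u, g y u) = (\<lambda>(a,b). (h a, h b)) (f a c, f b c)" using hom by auto
    show "(g x u, g y u) \<in> ?H ?R" unfolding eq using fR by (rule imageI)
  qed
  moreover have "?H X \<subseteq> ?H ?R" using rcg_upper by blast
  ultimately have 1: "right_cong_gen T g (?H X) \<subseteq> ?H ?R" by (rule rcg_least)
  let ?Q = "right_cong_gen T g (?H X)"
  have HX: "?H X \<subseteq> T \<times> T" using X hS by auto
  have rcQ: "right_congruence T g ?Q" using rcg_rc[OF clT HX] .
  have "right_congruence S f {(x,y). x \<in> S \<and> y \<in> S \<and> (h x, h y) \<in> ?Q}"
    using rc_preimage[OF rcQ hS hom cl] .
  moreover have "X \<subseteq> {(x,y). x \<in> S \<and> y \<in> S \<and> (h x, h y) \<in> ?Q}" using X rcg_upper[of "?H X" T g] by force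
  ultimately have "?R \<subseteq> {(x,y). x \<in> S \<and> y \<in> S \<and> (h x, h y) \<in> ?Q}" by (rule rcg_least)
  then have 2: "?H ?R \<subseteq> ?Q" by auto
  from 1 2 show ?thesis by blast
qed

lemma ann_image:
  assumes bij: "bij_betw h S T" and hom: "\<forall>x\<in>S. \<forall>y\<in>S. h (f x y) = g (h x) (h y)"
    and cl: "\<forall>x\<in>S. \<forall>y\<in>S. f x y \<in> S" and a: "a \<in> S"
  shows "right_annihilator T g (h a) = (\<lambda>(a,b). (h a, h b)) ` (right_annihilator S f a)"
proof -
  have inj: "\<And>x y. x \<in> S \<Longrightarrow> y \<in> S \<Longrightarrow> h x = h y \<Longrightarrow> x = y"
    using bij unfolding bij_betw_def inj_on_def by blast
  have imS: "\<And>x. x \<in> T \<Longrightarrow> \<exists>s\<in>S. x = h s" using bij unfolding bij_betw_def by blast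
  have hS: "\<And>x. x \<in> S \<Longrightarrow> h x \<in> T" using bij unfolding bij_betw_def by blast
  show ?thesis
  proof
    show "right_annihilator T g (h a) \<subseteq> (\<lambda>(a,b). (h a, h b)) ` (right_annihilator S f a)"
    proof
      fix p assume "p \<in> right_annihilator T g (h a)"
      then obtain x y where p: "p = (x,y)" "x \<in> T" "y \<in> T" "g (h a) x = g (h a) y"
        unfolding right_annihilator_def by auto
      then obtain s t where st: "s \<in> S" "t \<in> S" "x = h s" "y = h t" using imS by blast
      have "h (f a s) = g (h a) x" using hom a st by auto
      also have "\<dots> = g (h a) y" by (rule p(4))
      also have "\<dots> = h (f a t)" using hom a st by auto
      finally have "h (f a s) = h (f a t)" .
      moreover have "f a s \<in> S" "f a t \<in> S" using cl a st by auto
      ultimately have "f a s = f a t" using inj by blast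
      then have "(s,t) \<in> right_annihilator S f a" unfolding right_annihilator_def using st by auto
      then show "p \<in> (\<lambda>(a,b). (h a, h b)) ` (right_annihilator S f a)" using p st by force
    qed
  next
    show "(\<lambda>(a,b). (h a, h b)) ` (right_annihilator S f a) \<subseteq> right_annihilator T g (h a)"
    proof
      fix p assume "p \<in> (\<lambda>(a,b). (h a, h b)) ` (right_annihilator S f a)"
      then obtain s t where st: "p = (h s, h t)" "s \<in> S" "t \<in> S" "f a s = f a t"
        unfolding right_annihilator_def by auto
      have "g (h a) (h s) = h (f a s)" using hom a st(2) by auto
      also have "\<dots> = h (f a t)" using st by simp
      also have "\<dots> = g (h a) (h t)" using hom a st(3) by auto
      finally have "g (h a) (h s) = g (h a) (h t)" .
      then show "p \<in> right_annihilator T g (h a)" unfolding right_annihilator_def using st hS by auto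
    qed
  qed
qed

lemma fre_transfer1:
  assumes bij: "bij_betw h S T" and hom: "\<forall>x\<in>S. \<forall>y\<in>S. h (f x y) = g (h x) (h y)"
    and cl: "\<forall>x\<in>S. \<forall>y\<in>S. f x y \<in> S" and F: "fin_right_equated S f"
  shows "fin_right_equated T g"
  unfolding fin_right_equated_def
proof
  fix b assume "b \<in> T"
  then obtain a where a: "a \<in> S" "b = h a" using bij unfolding bij_betw_def by (metis imageE)
  then obtain X where X: "finite X" "X \<subseteq> S \<times> S" "right_cong_gen S f X = right_annihilator S f a"
    using F unfolding fin_right_equated_def by blast
  have hS: "\<forall>x\<in>S. h x \<in> T" using bij unfolding bij_betw_def by blast
  show "\<exists>X. finite X \<and> X \<subseteq> T \<times> T \<and> right_cong_gen T g X = right_annihilator T g b"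
    apply (rule exI[of _ "(\<lambda>(a,b). (h a, h b)) ` X"])
    using X hS rcg_image[OF bij hom cl X(2)] ann_image[OF bij hom cl a(1)] a(2) by auto
qed

lemma fre_transfer:
  assumes bij: "bij_betw h S T" and hom: "\<forall>x\<in>S. \<forall>y\<in>S. h (f x y) = g (h x) (h y)"
    and cl: "\<forall>x\<in>S. \<forall>y\<in>S. f x y \<in> S"
  shows "fin_right_equated T g \<longleftrightarrow> fin_right_equated S f"
proof
  assume "fin_right_equated S f" then show "fin_right_equated T g" using fre_transfer1[OF bij hom cl] by blast
next
  assume F: "fin_right_equated T g"
  let ?k = "inv_into S h"
  have bij2: "bij_betw ?k T S" using bij by (rule bij_betw_inv_into)
  have imS: "h ` S = T" using bij unfolding bij_betw_def by blast
  have hom2: "\<forall>x\<in>T. \<forall>y\<in>T. ?k (g x y) = f (?k x) (?k y)"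
  proof (intro ballI)
    fix x y assume "x \<in> T" "y \<in> T"
    then obtain a b where ab: "a \<in> S" "b \<in> S" "x = h a" "y = h b" using imS by blast
    then have "g x y = h (f a b)" using hom by auto
    then show "?k (g x y) = f (?k x) (?k y)"
      using ab cl bij by (simp add: bij_betw_inv_into_left)
  qed
  have clT: "\<forall>x\<in>T. \<forall>y\<in>T. g x y \<in> T"
  proof (intro ballI)
    fix x y assume "x \<in> T" "y \<in> T"
    then obtain a b where "a \<in> S" "b \<in> S" "x = h a" "y = h b" using imS by blast
    then show "g x y \<in> T" using hom cl imS by (metis imageI)
  qed
  show "fin_right_equated S f" using fre_transfer1[OF bij2 hom2 clT F] .
qed

lemma rcg_empty:
  assumes cl: "\<forall>x\<in>S. \<forall>y\<in>S. f x y \<in> S" shows "right_cong_gen S f {} = Id_on S"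
proof
  show "right_cong_gen S f {} \<subseteq> Id_on S" using rcg_least[OF rc_Id[OF cl]] by blast
  show "Id_on S \<subseteq> right_cong_gen S f {}" using rc_props(2)[OF rcg_rc[OF cl, of "{}"]] by auto
qed

text \<open>Case B: a = p x where x has a right inverse\<close>
lemma caseB:
  assumes cl: "\<forall>x\<in>S. \<forall>y\<in>S. f x y \<in> S"
    and as: "\<forall>x\<in>S. \<forall>y\<in>S. \<forall>z\<in>S. f (f x y) z = f x (f y z)"
    and e: "e \<in> S" "\<forall>y\<in>S. f e y = y"
    and p: "p \<in> S" and x: "x \<in> S" and b: "b \<in> S" and xb: "f x b = e"
    and Y: "Y \<subseteq> S \<times> S" "right_cong_gen S f Y = right_annihilator S f p"
    and Z: "Z \<subseteq> S \<times> S" "right_cong_gen S f Z = right_annihilator S f x"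
  shows "right_cong_gen S f (Z \<union> (\<lambda>(y1,y2). (f b y1, f b y2)) ` Y) = right_annihilator S f (f p x)"
proof
  let ?G = "Z \<union> (\<lambda>(y1,y2). (f b y1, f b y2)) ` Y"
  have GS: "?G \<subseteq> S \<times> S" using Z Y cl b by auto
  have a: "f p x \<in> S" using cl p x by auto
  have "?G \<subseteq> right_annihilator S f (f p x)"
  proof
    fix q assume "q \<in> ?G"
    then consider "q \<in> Z" | y1 y2 where "(y1,y2) \<in> Y" "q = (f b y1, f b y2)" by auto
    then show "q \<in> right_annihilator S f (f p x)"
    proof cases
      case 1
      then obtain s t where st: "q = (s,t)" "s \<in> S" "t \<in> S" "f x s = f x t"
        using Z rcg_upper[of Z S f] unfolding right_annihilator_def by auto
      then have "f (f p x) s = f (f p x) t" using as p x by simp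
      then show ?thesis using st unfolding right_annihilator_def by auto
    next
      case 2
      then have yy: "y1 \<in> S" "y2 \<in> S" "f p y1 = f p y2"
        using Y rcg_upper[of Y S f] unfolding right_annihilator_def by auto
      have "f (f p x) (f b y1) = f p (f (f x b) y1)" using as p x b yy cl by simp
      also have "\<dots> = f p y1" using xb e yy by simp
      finally have 1: "f (f p x) (f b y1) = f p y1" .
      have "f (f p x) (f b y2) = f p (f (f x b) y2)" using as p x b yy cl by simp
      also have "\<dots> = f p y2" using xb e yy by simp
      finally have "f (f p x) (f b y2) = f p y2" .
      with 1 yy 2 cl b show ?thesis unfolding right_annihilator_def by auto
    qed
  qed
  then show "right_cong_gen S f ?G \<subseteq> right_annihilator S f (f p x)"
    using rcg_least[OF ann_rc[OF cl as a]] by blast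
next
  let ?G = "Z \<union> (\<lambda>(y1,y2). (f b y1, f b y2)) ` Y"
  let ?R = "right_cong_gen S f ?G"
  have GS: "?G \<subseteq> S \<times> S" using Z Y cl b by auto
  have rcR: "right_congruence S f ?R" using rcg_rc[OF cl GS] .
  show "right_annihilator S f (f p x) \<subseteq> ?R"
  proof
    fix q assume "q \<in> right_annihilator S f (f p x)"
    then obtain s t where st: "q = (s,t)" "s \<in> S" "t \<in> S" "f (f p x) s = f (f p x) t"
      unfolding right_annihilator_def by auto
    then have "f p (f x s) = f p (f x t)" using as p x by simp
    then have "(f x s, f x t) \<in> right_annihilator S f p" using st cl x unfolding right_annihilator_def by auto
    then have xst: "(f x s, f x t) \<in> right_cong_gen S f Y" using Y by simp
    let ?P = "{(u,v). u \<in> S \<and> v \<in> S \<and> (f b u, f b v) \<in> ?R}"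
    have "right_congruence S f ?P"
    proof (rule rc_intro)
      fix u v w assume "(u,v) \<in> ?P" "w \<in> S"
      then have "u \<in> S" "v \<in> S" "(f (f b u) w, f (f b v) w) \<in> ?R" using rc_props(5)[OF rcR] by auto
      then show "(f u w, f v w) \<in> ?P" using as b \<open>w \<in> S\<close> cl by auto
    next
      show "?P \<subseteq> S \<times> S" by auto
    next
      fix u assume "u \<in> S" then show "(u,u) \<in> ?P" using rc_props(2)[OF rcR] cl b by auto
    next
      fix u v assume "(u,v) \<in> ?P" then show "(v,u) \<in> ?P" using rc_props(3)[OF rcR] by auto
    next
      fix u v w assume "(u,v) \<in> ?P" "(v,w) \<in> ?P"
      then have "u \<in> S" "w \<in> S" "(f b u, f b v) \<in> ?R" "(f b v, f b w) \<in> ?R" by auto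
      then show "(u,w) \<in> ?P" using rc_props(4)[OF rcR] by blast
    qed
    moreover have "Y \<subseteq> ?P" using rcg_upper[of ?G S f] Y by auto
    ultimately have "right_cong_gen S f Y \<subseteq> ?P" by (rule rcg_least)
    with xst have 1: "(f b (f x s), f b (f x t)) \<in> ?R" by auto
    have "\<And>s. s \<in> S \<Longrightarrow> (s, f b (f x s)) \<in> ?R"
    proof -
      fix s assume s: "s \<in> S"
      have "f x (f b (f x s)) = f (f x b) (f x s)" using as x b s cl by simp
      also have "\<dots> = f x s" using xb e x s cl by simp
      finally have "(s, f b (f x s)) \<in> right_annihilator S f x"
        unfolding right_annihilator_def using s cl x b by auto
      then have "(s, f b (f x s)) \<in> right_cong_gen S f Z" using Z by simp
      then show "(s, f b (f x s)) \<in> ?R" using rcg_mono[of Z ?G S f] by auto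
    qed
    from this[OF st(2)] this[OF st(3)] 1 show "q \<in> ?R"
      using rc_props(3,4)[OF rcR] st(1) by meson
  qed
qed



fun act :: "('i \<Rightarrow> ('a,'b) monoid_scheme) \<Rightarrow> 'i \<times> 'a \<Rightarrow> ('i \<times> 'a) list \<Rightarrow> ('i \<times> 'a) list" where
  "act M (i,m) [] = (if m = \<one>\<^bsub>M i\<^esub> then [] else [(i,m)])"
| "act M (i,m) ((j,b)#w) = (if j = i then (if m \<otimes>\<^bsub>M i\<^esub> b = \<one>\<^bsub>M i\<^esub> then w else (i, m \<otimes>\<^bsub>M i\<^esub> b)#w)
      else (if m = \<one>\<^bsub>M i\<^esub> then (j,b)#w else (i,m)#(j,b)#w))"

fun alt :: "('i \<times> 'a) list \<Rightarrow> bool" where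
  "alt (x#y#w) = (fst x \<noteq> fst y \<and> alt (y#w))"
| "alt _ = True"

definition Wd :: "'i set \<Rightarrow> ('i \<Rightarrow> ('a,'b) monoid_scheme) \<Rightarrow> ('i \<times> 'a) list set" where
  "Wd I M = {w. alt w \<and> (\<forall>(i,a)\<in>set w. i \<in> I \<and> a \<in> carrier (M i) \<and> a \<noteq> \<one>\<^bsub>M i\<^esub>)}"

definition Ld :: "'i set \<Rightarrow> ('i \<Rightarrow> ('a,'b) monoid_scheme) \<Rightarrow> ('i \<times> 'a) set" where
  "Ld I M = {(i,a). i \<in> I \<and> a \<in> carrier (M i)}"

definition red :: "('i \<Rightarrow> ('a,'b) monoid_scheme) \<Rightarrow> ('i \<times> 'a) list \<Rightarrow> ('i \<times> 'a) list" where
  "red M u = foldr (act M) u []"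

definition wmul :: "('i \<Rightarrow> ('a,'b) monoid_scheme) \<Rightarrow> ('i \<times> 'a) list \<Rightarrow> ('i \<times> 'a) list \<Rightarrow> ('i \<times> 'a) list" where
  "wmul M u v = red M (u @ v)"

definition nohd :: "'i \<Rightarrow> ('i \<times> 'a) list \<Rightarrow> bool" where
  "nohd i w \<longleftrightarrow> w = [] \<or> fst (hd w) \<noteq> i"

lemma W_Nil[simp]: "[] \<in> Wd I M" unfolding Wd_def by simp

lemma W_Cons: "(i,a)#w \<in> Wd I M \<longleftrightarrow> i \<in> I \<and> a \<in> carrier (M i) \<and> a \<noteq> \<one>\<^bsub>M i\<^esub> \<and> w \<in> Wd I M \<and> nohd i w"
  by (cases w) (auto simp: Wd_def nohd_def)

lemma nohd_simps[simp]: "nohd i []" "nohd i ((j,b)#w) \<longleftrightarrow> j \<noteq> i"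
  by (auto simp: nohd_def)

lemma act_nohd: "nohd i w \<Longrightarrow> act M (i,m) w = (if m = \<one>\<^bsub>M i\<^esub> then w else (i,m)#w)"
  by (cases w) (auto simp: nohd_def)

locale fp =
  fixes I :: "'i set" and M :: "'i \<Rightarrow> ('a, 'b) monoid_scheme"
  assumes mon: "\<And>i. i \<in> I \<Longrightarrow> monoid (M i)"
begin

abbreviation "W \<equiv> Wd I M"
abbreviation "L \<equiv> Ld I M"

lemma one_c: "i \<in> I \<Longrightarrow> \<one>\<^bsub>M i\<^esub> \<in> carrier (M i)" using monoid.one_closed[OF mon] .
lemma mc: "i \<in> I \<Longrightarrow> x \<in> carrier (M i) \<Longrightarrow> y \<in> carrier (M i) \<Longrightarrow> x \<otimes>\<^bsub>M i\<^esub> y \<in> carrier (M i)"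
  using monoid.m_closed[OF mon] .
lemma ma: "i \<in> I \<Longrightarrow> x \<in> carrier (M i) \<Longrightarrow> y \<in> carrier (M i) \<Longrightarrow> z \<in> carrier (M i) \<Longrightarrow>
   x \<otimes>\<^bsub>M i\<^esub> y \<otimes>\<^bsub>M i\<^esub> z = x \<otimes>\<^bsub>M i\<^esub> (y \<otimes>\<^bsub>M i\<^esub> z)"
  using monoid.m_assoc[OF mon] .
lemma lo: "i \<in> I \<Longrightarrow> x \<in> carrier (M i) \<Longrightarrow> \<one>\<^bsub>M i\<^esub> \<otimes>\<^bsub>M i\<^esub> x = x"
  using monoid.l_one[OF mon] .
lemma ro: "i \<in> I \<Longrightarrow> x \<in> carrier (M i) \<Longrightarrow> x \<otimes>\<^bsub>M i\<^esub> \<one>\<^bsub>M i\<^esub> = x"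
  using monoid.r_one[OF mon] .

lemma act_W: "i \<in> I \<Longrightarrow> m \<in> carrier (M i) \<Longrightarrow> w \<in> W \<Longrightarrow> act M (i,m) w \<in> W"
proof (cases w)
  case Nil
  assume "i \<in> I" "m \<in> carrier (M i)" then show ?thesis using Nil by (auto simp: W_Cons)
next
  case (Cons l w')
  assume a: "i \<in> I" "m \<in> carrier (M i)" "w \<in> W"
  obtain j b where l: "l = (j,b)" by (cases l)
  show ?thesis
  proof (cases "j = i")
    case True
    then have "b \<in> carrier (M i)" "w' \<in> W" "nohd i w'" using a Cons l by (auto simp: W_Cons)
    then show ?thesis using True Cons l a mc by (auto simp: W_Cons)
  next
    case False
    then show ?thesis using Cons l a by (auto simp: W_Cons)
  qed
qed

lemma act_W': "l \<in> L \<Longrightarrow> w \<in> W \<Longrightarrow> act M l w \<in> W"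
  using act_W by (cases l) (auto simp: Ld_def)

lemma act_one: "i \<in> I \<Longrightarrow> w \<in> W \<Longrightarrow> act M (i, \<one>\<^bsub>M i\<^esub>) w = w"
proof (cases w)
  case (Cons l w')
  assume a: "i \<in> I" "w \<in> W"
  obtain j b where l: "l = (j,b)" by (cases l)
  show ?thesis
  proof (cases "j = i")
    case True
    then have "b \<in> carrier (M i)" "b \<noteq> \<one>\<^bsub>M i\<^esub>" using a Cons l by (auto simp: W_Cons)
    then show ?thesis using True Cons l a lo by auto
  qed (use Cons l in auto)
qed simp

lemma act_act:
  assumes i: "i \<in> I" and m: "m \<in> carrier (M i)" and m': "m' \<in> carrier (M i)" and w: "w \<in> W"
  shows "act M (i,m) (act M (i,m') w) = act M (i, m \<otimes>\<^bsub>M i\<^esub> m') w"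
proof (cases w)
  case Nil
  then show ?thesis using i m m' ro by auto
next
  case (Cons l w')
  obtain j b where l: "l = (j,b)" by (cases l)
  show ?thesis
  proof (cases "j = i")
    case True
    then have b: "b \<in> carrier (M i)" and w': "w' \<in> W" "nohd i w'" using w Cons l by (auto simp: W_Cons)
    have assoc: "m \<otimes>\<^bsub>M i\<^esub> m' \<otimes>\<^bsub>M i\<^esub> b = m \<otimes>\<^bsub>M i\<^esub> (m' \<otimes>\<^bsub>M i\<^esub> b)"
      using ma i m m' b by blast
    show ?thesis
    proof (cases "m' \<otimes>\<^bsub>M i\<^esub> b = \<one>\<^bsub>M i\<^esub>")
      case T2: True
      then have "m \<otimes>\<^bsub>M i\<^esub> m' \<otimes>\<^bsub>M i\<^esub> b = m" using assoc ro i m by simp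
      have "act M (i,m) w' = (if m = \<one>\<^bsub>M i\<^esub> then w' else (i,m)#w')" by (rule act_nohd[OF w'(2)])
      moreover have "act M (i, \<one>\<^bsub>M i\<^esub>) w' = w'" by (rule act_one[OF i w'(1)])
      ultimately show ?thesis using T2 True Cons l \<open>m \<otimes>\<^bsub>M i\<^esub> m' \<otimes>\<^bsub>M i\<^esub> b = m\<close> by simp
    next
      case F2: False
      then show ?thesis using True Cons l assoc by simp
    qed
  next
    case False
    show ?thesis
    proof (cases "m' = \<one>\<^bsub>M i\<^esub>")
      case True then show ?thesis using ro i m act_one[OF i w] by simp
    next
      case F2: False
      then show ?thesis using False Cons l by simp
    qed
  qed
qed

lemma foldr_W: "set u \<subseteq> L \<Longrightarrow> w \<in> W \<Longrightarrow> foldr (act M) u w \<in> W"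
  by (induction u) (auto intro: act_W')

lemma red_W: "set u \<subseteq> L \<Longrightarrow> red M u \<in> W"
  unfolding red_def by (rule foldr_W) auto

lemma W_L: "w \<in> W \<Longrightarrow> set w \<subseteq> L"
  unfolding Wd_def Ld_def by auto

lemma red_id: "w \<in> W \<Longrightarrow> red M w = w"
proof (induction w)
  case (Cons l w)
  obtain i a where l: "l = (i,a)" by (cases l)
  then have h: "a \<noteq> \<one>\<^bsub>M i\<^esub>" "w \<in> W" "nohd i w" using Cons.prems by (auto simp: W_Cons)
  then have "red M w = w" using Cons.IH by blast
  moreover have "act M (i,a) w = (i,a)#w" using act_nohd[OF h(3), of M a] h(1) by simp
  ultimately show ?case using l by (simp add: red_def)
qed (simp add: red_def)

lemma foldr_act_act:
  assumes w0: "w0 \<in> W" and l: "l \<in> L" and w: "w \<in> W"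
  shows "foldr (act M) (act M l w0) w = act M l (foldr (act M) w0 w)"
proof -
  obtain i m where lm: "l = (i,m)" "i \<in> I" "m \<in> carrier (M i)" using l by (auto simp: Ld_def)
  show ?thesis
  proof (cases w0)
    case Nil
    then show ?thesis using lm act_one w by auto
  next
    case (Cons l' w')
    obtain j b where l': "l' = (j,b)" by (cases l')
    have jb: "j \<in> I" "b \<in> carrier (M j)" "w' \<in> W" "nohd j w'" using w0 Cons l' by (auto simp: W_Cons)
    have fw': "foldr (act M) w' w \<in> W" using foldr_W[OF W_L[OF jb(3)] w] .
    show ?thesis
    proof (cases "j = i")
      case True
      then have AA: "act M (i,m) (act M (i,b) (foldr (act M) w' w)) = act M (i, m \<otimes>\<^bsub>M i\<^esub> b) (foldr (act M) w' w)"
        using act_act[OF lm(2,3) _ fw'] jb by simp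
      show ?thesis
      proof (cases "m \<otimes>\<^bsub>M i\<^esub> b = \<one>\<^bsub>M i\<^esub>")
        case T2: True
        then show ?thesis using AA True Cons l' lm act_one[OF lm(2) fw'] by simp
      next
        case False
        then show ?thesis using AA True Cons l' lm by simp
      qed
    next
      case False
      then show ?thesis using Cons l' lm act_one[OF lm(2)] foldr_W[OF W_L[OF w0] w] Cons by auto
    qed
  qed
qed

lemma foldr_red:
  assumes "set u \<subseteq> L" "w \<in> W"
  shows "foldr (act M) u w = foldr (act M) (red M u) w"
  using assms
proof (induction u)
  case Nil then show ?case by (simp add: red_def)
next
  case (Cons l u)
  have ru: "red M u \<in> W" using red_W Cons.prems by auto
  have "foldr (act M) (l#u) w = act M l (foldr (act M) (red M u) w)" using Cons by simp
  also have "\<dots> = foldr (act M) (act M l (red M u)) w"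
    using foldr_act_act[OF ru _ Cons.prems(2)] Cons.prems by simp
  also have "act M l (red M u) = red M (l#u)" by (simp add: red_def)
  finally show ?case .
qed

lemma red_append: "set u \<subseteq> L \<Longrightarrow> set v \<subseteq> L \<Longrightarrow> red M (u @ v) = red M (red M u @ red M v)"
proof -
  assume u: "set u \<subseteq> L" and v: "set v \<subseteq> L"
  have "red M (u @ v) = foldr (act M) u (red M v)" by (simp add: red_def)
  also have "\<dots> = foldr (act M) (red M u) (red M v)" using foldr_red[OF u red_W[OF v]] .
  also have "\<dots> = foldr (act M) (red M u) (red M (red M v))" using red_id[OF red_W[OF v]] by simp
  also have "\<dots> = red M (red M u @ red M v)" by (simp add: red_def)
  finally show ?thesis .
qed

lemma wmul_W: "u \<in> W \<Longrightarrow> v \<in> W \<Longrightarrow> wmul M u v \<in> W"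
  unfolding wmul_def using red_W W_L by auto

lemma wmul_assoc: "u \<in> W \<Longrightarrow> v \<in> W \<Longrightarrow> x \<in> W \<Longrightarrow> wmul M (wmul M u v) x = wmul M u (wmul M v x)"
proof -
  assume u: "u \<in> W" and v: "v \<in> W" and x: "x \<in> W"
  have Lu: "set u \<subseteq> L" and Lv: "set v \<subseteq> L" and Lx: "set x \<subseteq> L" using W_L u v x by auto
  have "wmul M (wmul M u v) x = red M (red M (u@v) @ red M x)" unfolding wmul_def using red_id[OF x] by simp
  also have "\<dots> = red M ((u @ v) @ x)" using red_append[of "u@v" x] Lu Lv Lx by simp
  also have "\<dots> = red M (red M u @ red M (v @ x))" using red_append[of u "v@x"] Lu Lv Lx by simp
  also have "\<dots> = wmul M u (wmul M v x)" unfolding wmul_def using red_id[OF u] by simp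
  finally show ?thesis .
qed

lemma wmul_Nil: "w \<in> W \<Longrightarrow> wmul M [] w = w" "w \<in> W \<Longrightarrow> wmul M w [] = w"
  unfolding wmul_def using red_id by auto

end


lemma sc_props:
  assumes "semigroup_congruence S f \<rho>"
  shows "\<rho> \<subseteq> S \<times> S" "x \<in> S \<Longrightarrow> (x,x) \<in> \<rho>" "(x,y) \<in> \<rho> \<Longrightarrow> (y,x) \<in> \<rho>"
    "(x,y) \<in> \<rho> \<Longrightarrow> (y,z) \<in> \<rho> \<Longrightarrow> (x,z) \<in> \<rho>"
    "(x,y) \<in> \<rho> \<Longrightarrow> u \<in> S \<Longrightarrow> (f x u, f y u) \<in> \<rho>"
    "(x,y) \<in> \<rho> \<Longrightarrow> u \<in> S \<Longrightarrow> (f u x, f u y) \<in> \<rho>"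
proof -
  have e: "equiv S \<rho>" and c: "\<forall>s t u. (s, t) \<in> \<rho> \<longrightarrow> u \<in> S \<longrightarrow> (f s u, f t u) \<in> \<rho> \<and> (f u s, f u t) \<in> \<rho>"
    using assms unfolding semigroup_congruence_def by auto
  show "\<rho> \<subseteq> S \<times> S" using e unfolding equiv_def refl_on_def by blast
  show "x \<in> S \<Longrightarrow> (x,x) \<in> \<rho>" using e unfolding equiv_def refl_on_def by blast
  show "(x,y) \<in> \<rho> \<Longrightarrow> (y,x) \<in> \<rho>" using e unfolding equiv_def sym_def by blast
  show "(x,y) \<in> \<rho> \<Longrightarrow> (y,z) \<in> \<rho> \<Longrightarrow> (x,z) \<in> \<rho>" using e unfolding equiv_def trans_def by blast
  show "(x,y) \<in> \<rho> \<Longrightarrow> u \<in> S \<Longrightarrow> (f x u, f y u) \<in> \<rho>" by (simp add: c)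
  show "(x,y) \<in> \<rho> \<Longrightarrow> u \<in> S \<Longrightarrow> (f u x, f u y) \<in> \<rho>" by (simp add: c)
qed

lemma sc_intro:
  assumes "\<rho> \<subseteq> S \<times> S" "\<And>x. x \<in> S \<Longrightarrow> (x,x) \<in> \<rho>" "\<And>x y. (x,y) \<in> \<rho> \<Longrightarrow> (y,x) \<in> \<rho>"
    "\<And>x y z. (x,y) \<in> \<rho> \<Longrightarrow> (y,z) \<in> \<rho> \<Longrightarrow> (x,z) \<in> \<rho>"
    "\<And>x y u. (x,y) \<in> \<rho> \<Longrightarrow> u \<in> S \<Longrightarrow> (f x u, f y u) \<in> \<rho>"
    "\<And>x y u. (x,y) \<in> \<rho> \<Longrightarrow> u \<in> S \<Longrightarrow> (f u x, f u y) \<in> \<rho>"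
  shows "semigroup_congruence S f \<rho>"
  unfolding semigroup_congruence_def equiv_def refl_on_def
proof (intro conjI allI impI)
  show "\<rho> \<subseteq> S \<times> S" by (rule assms(1))
  show "\<forall>x\<in>S. (x, x) \<in> \<rho>" using assms(2) by blast
  show "sym \<rho>" using assms(3) by (rule symI)
  show "trans \<rho>" using assms(4) by (rule transI)
  fix s t u assume "(s,t) \<in> \<rho>" "u \<in> S"
  then show "(f s u, f t u) \<in> \<rho>" "(f u s, f u t) \<in> \<rho>" using assms(5,6) by auto
qed

lemma cg_upper: "X \<subseteq> cong_gen S f X"
  unfolding cong_gen_def by blast

lemma cg_least: "semigroup_congruence S f \<rho> \<Longrightarrow> X \<subseteq> \<rho> \<Longrightarrow> cong_gen S f X \<subseteq> \<rho>"
  unfolding cong_gen_def by blast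

lemma cg_sc:
  assumes cl: "\<forall>x\<in>S. \<forall>y\<in>S. f x y \<in> S" and X: "X \<subseteq> S \<times> S"
  shows "semigroup_congruence S f (cong_gen S f X)"
proof -
  let ?F = "{\<rho>. semigroup_congruence S f \<rho> \<and> X \<subseteq> \<rho>}"
  have full: "semigroup_congruence S f (S \<times> S)" using cl by (intro sc_intro) auto
  have ne: "S \<times> S \<in> ?F" using full X by blast
  have e: "cong_gen S f X = \<Inter>?F" unfolding cong_gen_def ..
  show ?thesis unfolding e
  proof (rule sc_intro)
    show "\<Inter>?F \<subseteq> S \<times> S" using ne by blast
    show "\<And>x. x \<in> S \<Longrightarrow> (x, x) \<in> \<Inter>?F"
      by (auto intro: sc_props(2))
    show "\<And>x y. (x, y) \<in> \<Inter>?F \<Longrightarrow> (y, x) \<in> \<Inter>?F"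
      by (auto intro: sc_props(3))
    show "\<And>x y z. (x, y) \<in> \<Inter>?F \<Longrightarrow> (y, z) \<in> \<Inter>?F \<Longrightarrow> (x, z) \<in> \<Inter>?F"
    proof -
      fix x y z assume A: "(x, y) \<in> \<Inter>?F" "(y, z) \<in> \<Inter>?F"
      show "(x, z) \<in> \<Inter>?F"
      proof
        fix \<rho> assume "\<rho> \<in> ?F"
        then have "semigroup_congruence S f \<rho>" "(x,y) \<in> \<rho>" "(y,z) \<in> \<rho>" using A by auto
        then show "(x, z) \<in> \<rho>" using sc_props(4) by metis
      qed
    qed
    show "\<And>s t u. (s, t) \<in> \<Inter>?F \<Longrightarrow> u \<in> S \<Longrightarrow> (f s u, f t u) \<in> \<Inter>?F"
      by (auto intro: sc_props(5))
    show "\<And>s t u. (s, t) \<in> \<Inter>?F \<Longrightarrow> u \<in> S \<Longrightarrow> (f u s, f u t) \<in> \<Inter>?F"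
      by (auto intro: sc_props(6))
  qed
qed

lemma all_nat_split: "(\<forall>k::nat. P k) \<longleftrightarrow> P 0 \<and> (\<forall>k. P (Suc k))"
  by (metis not0_implies_Suc)

lemma alt_nth: "alt w \<longleftrightarrow> (\<forall>k. Suc k < length w \<longrightarrow> fst (w ! k) \<noteq> fst (w ! Suc k))"
proof (induction w rule: alt.induct)
  case (1 x y w)
  show ?case
    apply (subst all_nat_split)
    using 1 by simp
qed auto

lemma alt_Cons: "alt (x # w) \<longleftrightarrow> alt w \<and> (w = [] \<or> fst x \<noteq> fst (hd w))"
  by (cases w) auto

lemma alt_append: "alt (u @ v) \<longleftrightarrow> alt u \<and> alt v \<and> (u = [] \<or> v = [] \<or> fst (last u) \<noteq> fst (hd v))"
proof (induction u)
  case (Cons x u)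
  show ?case
  proof (cases u)
    case Nil then show ?thesis by (cases v) (auto simp: alt_Cons)
  next
    case (Cons y u') then show ?thesis using Cons.IH \<open>u = y # u'\<close> by (auto simp: alt_Cons)
  qed
qed auto

lemma C_iff: "w \<in> sg_free_prod_carrier I M \<longleftrightarrow> w \<noteq> [] \<and> set w \<subseteq> Ld I M \<and> alt w"
  unfolding sg_free_prod_carrier_def Ld_def alt_nth by auto

context fp begin

abbreviation "C \<equiv> sg_free_prod_carrier I M"
abbreviation "sgm \<equiv> sg_free_prod_mult M"
abbreviation "\<theta> \<equiv> free_prod_cong I M"

lemma W_C: "w \<in> W \<Longrightarrow> w \<noteq> [] \<Longrightarrow> w \<in> C"
  unfolding C_iff using W_L by (auto simp: Wd_def)

lemma C_L: "u \<in> C \<Longrightarrow> set u \<subseteq> L" unfolding C_iff by auto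

lemma sgm_cases:
  assumes u: "u \<in> C" and v: "v \<in> C"
  obtains (merge) u0 i a b v0 where "u = u0 @ [(i,a)]" "v = (i,b) # v0" "sgm u v = u0 @ [(i, a \<otimes>\<^bsub>M i\<^esub> b)] @ v0"
  | (app) "fst (last u) \<noteq> fst (hd v)" "sgm u v = u @ v"
proof (cases "fst (last u) = fst (hd v)")
  case True
  obtain i a where la: "last u = (i,a)" by (cases "last u")
  obtain j b where hb: "hd v = (j,b)" by (cases "hd v")
  have "u \<noteq> []" "v \<noteq> []" using u v by (auto simp: C_iff)
  then have "u = butlast u @ [(i,a)]" "v = (j,b) # tl v"
    using append_butlast_last_id[of u] list.collapse[of v] la hb by auto
  moreover have "i = j" using True la hb by simp
  moreover have "sgm u v = butlast u @ [(i, a \<otimes>\<^bsub>M i\<^esub> b)] @ tl v"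
    using True la hb unfolding sg_free_prod_mult_def by simp
  ultimately show ?thesis using merge by metis
next
  case False
  then show ?thesis using app unfolding sg_free_prod_mult_def by simp
qed

lemma sgm_C: "u \<in> C \<Longrightarrow> v \<in> C \<Longrightarrow> sgm u v \<in> C"
proof -
  assume u: "u \<in> C" and v: "v \<in> C"
  show ?thesis using u v
  proof (cases rule: sgm_cases)
    case (merge u0 i a b v0)
    have "alt (u0 @ [(i,a)])" "alt ((i,b) # v0)" using u v merge by (auto simp: C_iff)
    then have A: "alt u0" "u0 = [] \<or> fst (last u0) \<noteq> i" "alt v0" "v0 = [] \<or> fst (hd v0) \<noteq> i"
      by (auto simp: alt_append alt_Cons)
    have L: "set u0 \<subseteq> L" "set v0 \<subseteq> L" "(i,a) \<in> L" "(i,b) \<in> L" using u v merge by (auto simp: C_iff)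
    then have "(i, a \<otimes>\<^bsub>M i\<^esub> b) \<in> L" using mc by (auto simp: Ld_def)
    then show ?thesis using A L merge(3) by (auto simp: C_iff alt_append alt_Cons)
  next
    case app
    then show ?thesis using u v by (auto simp: C_iff alt_append)
  qed
qed

lemma red_sgm: "u \<in> C \<Longrightarrow> v \<in> C \<Longrightarrow> red M (sgm u v) = red M (u @ v)"
proof -
  assume u: "u \<in> C" and v: "v \<in> C"
  show ?thesis using u v
  proof (cases rule: sgm_cases)
    case (merge u0 i a b v0)
    have L: "set v0 \<subseteq> L" "i \<in> I" "a \<in> carrier (M i)" "b \<in> carrier (M i)"
      using u v merge by (auto simp: C_iff Ld_def)
    have "red M (sgm u v) = foldr (act M) u0 (act M (i, a \<otimes>\<^bsub>M i\<^esub> b) (red M v0))"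
      using merge(3) by (simp add: red_def)
    also have "\<dots> = foldr (act M) u0 (act M (i,a) (act M (i,b) (red M v0)))"
      using act_act[OF L(2,3,4) red_W[OF L(1)]] by simp
    also have "\<dots> = red M (u @ v)" using merge(1,2) by (simp add: red_def)
    finally show ?thesis .
  next
    case app then show ?thesis by simp
  qed
qed

definition K where "K = {(u,v). u \<in> C \<and> v \<in> C \<and> red M u = red M v}"

lemma K_sc: "semigroup_congruence C sgm K"
proof (rule sc_intro)
  fix x y u assume "(x,y) \<in> K" "u \<in> C"
  then have h: "x \<in> C" "y \<in> C" "red M x = red M y" by (auto simp: K_def)
  have "red M (sgm x u) = red M (red M x @ red M u)" using red_sgm red_append C_L h \<open>u \<in> C\<close> by simp
  also have "\<dots> = red M (sgm y u)" using red_sgm red_append C_L h \<open>u \<in> C\<close> by simp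
  finally show "(sgm x u, sgm y u) \<in> K" using sgm_C h \<open>u \<in> C\<close> by (auto simp: K_def)
next
  fix x y u assume "(x,y) \<in> K" "u \<in> C"
  then have h: "x \<in> C" "y \<in> C" "red M x = red M y" by (auto simp: K_def)
  have "red M (sgm u x) = red M (red M u @ red M x)" using red_sgm red_append C_L h \<open>u \<in> C\<close> by simp
  also have "\<dots> = red M (sgm u y)" using red_sgm red_append C_L h \<open>u \<in> C\<close> by simp
  finally show "(sgm u x, sgm u y) \<in> K" using sgm_C h \<open>u \<in> C\<close> by (auto simp: K_def)
qed (auto simp: K_def)

abbreviation "G \<equiv> {([(i, \<one>\<^bsub>M i\<^esub>)], [(j, \<one>\<^bsub>M j\<^esub>)]) | i j. i \<in> I \<and> j \<in> I}"

lemma G_C: "G \<subseteq> C \<times> C"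
proof
  fix p assume "p \<in> G"
  then obtain i j where "p = ([(i, \<one>\<^bsub>M i\<^esub>)], [(j, \<one>\<^bsub>M j\<^esub>)])" "i \<in> I" "j \<in> I" by blast
  then show "p \<in> C \<times> C" using one_c by (simp add: C_iff Ld_def)
qed

lemma theta_sc: "semigroup_congruence C sgm \<theta>"
  unfolding free_prod_cong_def
proof (rule cg_sc[OF _ G_C])
  show "\<forall>x\<in>C. \<forall>y\<in>C. sgm x y \<in> C" using sgm_C by simp
qed

lemma G_theta: "i \<in> I \<Longrightarrow> j \<in> I \<Longrightarrow> ([(i, \<one>\<^bsub>M i\<^esub>)], [(j, \<one>\<^bsub>M j\<^esub>)]) \<in> \<theta>"
  unfolding free_prod_cong_def
  by (rule subsetD[OF cg_upper]) simp

lemma theta_K: "\<theta> \<subseteq> K"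
  unfolding free_prod_cong_def
proof (rule cg_least[OF K_sc])
  show "G \<subseteq> K"
  proof
    fix p assume "p \<in> G"
    then obtain i j where p: "p = ([(i, \<one>\<^bsub>M i\<^esub>)], [(j, \<one>\<^bsub>M j\<^esub>)])" "i \<in> I" "j \<in> I" by blast
    then have "p \<in> C \<times> C" using G_C \<open>p \<in> G\<close> by blast
    moreover have "red M [(i, \<one>\<^bsub>M i\<^esub>)] = []" "red M [(j, \<one>\<^bsub>M j\<^esub>)] = []"
      by (simp_all add: red_def)
    ultimately show "p \<in> K" using p by (simp add: K_def)
  qed
qed

end


context fp begin

definition "i0 = (SOME i. i \<in> I)"
definition "canon w = (if w = [] then [(i0, \<one>\<^bsub>M i0\<^esub>)] else w)"

lemma i0: "I \<noteq> {} \<Longrightarrow> i0 \<in> I" unfolding i0_def by (simp add: some_in_eq)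

lemma th_refl: "x \<in> C \<Longrightarrow> (x,x) \<in> \<theta>" using sc_props(2)[OF theta_sc] .
lemma th_sym: "(x,y) \<in> \<theta> \<Longrightarrow> (y,x) \<in> \<theta>" using sc_props(3)[OF theta_sc] .
lemma th_trans: "(x,y) \<in> \<theta> \<Longrightarrow> (y,z) \<in> \<theta> \<Longrightarrow> (x,z) \<in> \<theta>" using sc_props(4)[OF theta_sc] .
lemma th_right: "(x,y) \<in> \<theta> \<Longrightarrow> u \<in> C \<Longrightarrow> (sgm x u, sgm y u) \<in> \<theta>" using sc_props(5)[OF theta_sc] .
lemma th_left: "(x,y) \<in> \<theta> \<Longrightarrow> u \<in> C \<Longrightarrow> (sgm u x, sgm u y) \<in> \<theta>" using sc_props(6)[OF theta_sc] .

lemma single_C: "i \<in> I \<Longrightarrow> m \<in> carrier (M i) \<Longrightarrow> [(i,m)] \<in> C"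
  by (simp add: C_iff Ld_def)

lemma canon_C: "I \<noteq> {} \<Longrightarrow> w \<in> W \<Longrightarrow> canon w \<in> C"
  unfolding canon_def using W_C single_C[OF i0 one_c[OF i0]] by auto

lemma one_cons:
  assumes w: "w \<in> W" "w \<noteq> []" and i: "i \<in> I" "i \<noteq> fst (hd w)"
  shows "((i, \<one>\<^bsub>M i\<^esub>) # w, w) \<in> \<theta>"
proof -
  obtain k c w' where wk: "w = (k,c) # w'" using w(2) by (cases w) auto
  have kc: "k \<in> I" "c \<in> carrier (M k)" using w wk by (auto simp: W_Cons)
  have wC: "w \<in> C" using W_C w by blast
  have e1: "sgm [(i, \<one>\<^bsub>M i\<^esub>)] w = (i, \<one>\<^bsub>M i\<^esub>) # w"
    using i wk unfolding sg_free_prod_mult_def by simp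
  have e2: "sgm [(k, \<one>\<^bsub>M k\<^esub>)] w = w"
    using wk lo[OF kc] unfolding sg_free_prod_mult_def by simp
  have "(sgm [(i, \<one>\<^bsub>M i\<^esub>)] w, sgm [(k, \<one>\<^bsub>M k\<^esub>)] w) \<in> \<theta>"
    using th_right[OF G_theta[OF i(1) kc(1)] wC] .
  then show ?thesis using e1 e2 by simp
qed

lemma step:
  assumes ne: "I \<noteq> {}" and i: "i \<in> I" and m: "m \<in> carrier (M i)" and w: "w \<in> W"
  shows "(sgm [(i,m)] (canon w), canon (act M (i,m) w)) \<in> \<theta>"
proof (cases w)
  case Nil
  have i0I: "i0 \<in> I" using i0[OF ne] .
  show ?thesis
  proof (cases "i = i0")
    case True
    then have "sgm [(i,m)] (canon w) = [(i,m)]" using Nil ro[OF i m]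
      unfolding canon_def sg_free_prod_mult_def by simp
    moreover have "canon (act M (i,m) w) = [(i,m)]" using Nil True unfolding canon_def by simp
    ultimately show ?thesis using th_refl single_C[OF i m] by simp
  next
    case False
    have "(sgm [(i,m)] [(i, \<one>\<^bsub>M i\<^esub>)], sgm [(i,m)] [(i0, \<one>\<^bsub>M i0\<^esub>)]) \<in> \<theta>"
      using th_left[OF G_theta[OF i i0I] single_C[OF i m]] .
    moreover have "sgm [(i,m)] [(i, \<one>\<^bsub>M i\<^esub>)] = [(i,m)]" using ro[OF i m]
      unfolding sg_free_prod_mult_def by simp
    moreover have "sgm [(i,m)] (canon w) = sgm [(i,m)] [(i0, \<one>\<^bsub>M i0\<^esub>)]" using Nil unfolding canon_def by simp
    ultimately have 1: "(sgm [(i,m)] (canon w), [(i,m)]) \<in> \<theta>" using th_sym by simp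
    show ?thesis
    proof (cases "m = \<one>\<^bsub>M i\<^esub>")
      case True
      then have "canon (act M (i,m) w) = [(i0, \<one>\<^bsub>M i0\<^esub>)]" using Nil unfolding canon_def by simp
      then show ?thesis using th_trans[OF 1] G_theta[OF i i0I] True by simp
    next
      case F: False
      then have "canon (act M (i,m) w) = [(i,m)]" using Nil unfolding canon_def by simp
      then show ?thesis using 1 by simp
    qed
  qed
next
  case (Cons l w')
  obtain j b where l: "l = (j,b)" by (cases l)
  have wne: "w \<noteq> []" using Cons by simp
  have cw: "canon w = w" using wne unfolding canon_def by simp
  have jb: "j \<in> I" "b \<in> carrier (M j)" "w' \<in> W" "nohd j w'" using w Cons l by (auto simp: W_Cons)
  show ?thesis
  proof (cases "j = i")
    case True
    have e: "sgm [(i,m)] (canon w) = (i, m \<otimes>\<^bsub>M i\<^esub> b) # w'" using cw Cons l True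
      unfolding sg_free_prod_mult_def by simp
    show ?thesis
    proof (cases "m \<otimes>\<^bsub>M i\<^esub> b = \<one>\<^bsub>M i\<^esub>")
      case T2: True
      then have a: "act M (i,m) w = w'" using Cons l True by simp
      show ?thesis
      proof (cases "w' = []")
        case True
        then show ?thesis using e a T2 G_theta[OF i i0[OF ne]] unfolding canon_def by simp
      next
        case False
        then have "fst (hd w') \<noteq> i" using jb(4) \<open>j = i\<close> by (auto simp: nohd_def)
        then have "((i, \<one>\<^bsub>M i\<^esub>) # w', w') \<in> \<theta>" using one_cons[OF jb(3) False i] by simp
        then show ?thesis using e a T2 False unfolding canon_def by simp
      qed
    next
      case F2: False
      then have a: "act M (i,m) w = (i, m \<otimes>\<^bsub>M i\<^esub> b) # w'" using Cons l True by simp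
      have "act M (i,m) w \<in> C" using W_C act_W[OF i m w] a by simp
      then show ?thesis using a e th_refl unfolding canon_def by simp
    qed
  next
    case False
    have e: "sgm [(i,m)] (canon w) = (i, m) # w" using cw Cons l False
      unfolding sg_free_prod_mult_def by simp
    show ?thesis
    proof (cases "m = \<one>\<^bsub>M i\<^esub>")
      case True
      then have a: "act M (i,m) w = w" using Cons l False by simp
      have "i \<noteq> fst (hd w)" using Cons l False by simp
      then have "((i, \<one>\<^bsub>M i\<^esub>) # w, w) \<in> \<theta>" using one_cons[OF w wne i] by simp
      then show ?thesis using e a True cw by simp
    next
      case F2: False
      then have a: "act M (i,m) w = (i, m) # w" using Cons l False by simp
      have "act M (i,m) w \<in> C" using W_C act_W[OF i m w] a by simp
      then show ?thesis using a e th_refl unfolding canon_def by simp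
    qed
  qed
qed

lemma to_canon: "u \<in> C \<Longrightarrow> (u, canon (red M u)) \<in> \<theta>"
proof (induction u)
  case Nil then show ?case by (simp add: C_iff)
next
  case (Cons l u')
  obtain i m where l: "l = (i,m)" by (cases l)
  have im: "i \<in> I" "m \<in> carrier (M i)" using Cons.prems l by (auto simp: C_iff Ld_def)
  have ne: "I \<noteq> {}" using im by auto
  show ?case
  proof (cases "u' = []")
    case True
    show ?thesis
    proof (cases "m = \<one>\<^bsub>M i\<^esub>")
      case T2: True
      then show ?thesis using True l G_theta[OF im(1) i0[OF ne]] by (simp add: red_def canon_def)
    next
      case False
      then show ?thesis using True l th_refl Cons.prems by (simp add: red_def canon_def)
    qed
  next
    case False
    have u'C: "u' \<in> C" and d: "fst l \<noteq> fst (hd u')" using Cons.prems False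
      by (auto simp: C_iff alt_Cons)
    have e: "l # u' = sgm [l] u'" using d False unfolding sg_free_prod_mult_def by simp
    have 1: "(sgm [l] u', sgm [l] (canon (red M u'))) \<in> \<theta>"
      using th_left[OF Cons.IH[OF u'C]] single_C[OF im] l by simp
    have 2: "(sgm [l] (canon (red M u')), canon (act M l (red M u'))) \<in> \<theta>"
      using step[OF ne im red_W[OF C_L[OF u'C]]] l by simp
    have "red M (l # u') = act M l (red M u')" by (simp add: red_def)
    then show ?thesis using th_trans[OF 1 2] e by simp
  qed
qed

lemma theta_eq: "\<theta> = K"
proof
  show "\<theta> \<subseteq> K" by (rule theta_K)
  show "K \<subseteq> \<theta>"
  proof
    fix p assume "p \<in> K"
    then obtain u v where p: "p = (u,v)" "u \<in> C" "v \<in> C" "red M u = red M v" by (auto simp: K_def)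
    have "(u, canon (red M u)) \<in> \<theta>" using to_canon p by blast
    moreover have "(canon (red M u), v) \<in> \<theta>" using th_sym to_canon[OF p(3)] p(4) by simp
    ultimately show "p \<in> \<theta>" using th_trans p(1) by blast
  qed
qed

end


context fp begin

definition "phi A = red M (SOME u. u \<in> A)"

lemma theta_equiv: "equiv C \<theta>" using theta_sc unfolding semigroup_congruence_def by blast

lemma class_sub: "A \<in> C // \<theta> \<Longrightarrow> A \<subseteq> C"
  using theta_equiv by (metis Union_quotient Union_upper)

lemma some_in_class: "A \<in> C // \<theta> \<Longrightarrow> (SOME u. u \<in> A) \<in> A"
proof -
  assume "A \<in> C // \<theta>"
  then obtain u where "u \<in> C" "A = \<theta> `` {u}" by (rule quotientE)
  then have "u \<in> A" using th_refl by auto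
  then show ?thesis by (rule someI)
qed

lemma phi_class: "u \<in> C \<Longrightarrow> phi (\<theta> `` {u}) = red M u"
proof -
  assume u: "u \<in> C"
  have "(SOME v. v \<in> \<theta> `` {u}) \<in> \<theta> `` {u}" using some_in_class[OF quotientI[OF u]] .
  then have "(u, SOME v. v \<in> \<theta> `` {u}) \<in> K" using theta_eq by auto
  then show ?thesis unfolding phi_def K_def by simp
qed

lemma phi_bij: "I \<noteq> {} \<Longrightarrow> bij_betw phi (C // \<theta>) W"
  unfolding bij_betw_def
proof
  show "inj_on phi (C // \<theta>)"
  proof (rule inj_onI)
    fix A B assume A: "A \<in> C // \<theta>" and B: "B \<in> C // \<theta>" and e: "phi A = phi B"
    obtain u where u: "u \<in> C" "A = \<theta> `` {u}" using A by (rule quotientE)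
    obtain v where v: "v \<in> C" "B = \<theta> `` {v}" using B by (rule quotientE)
    have "red M u = red M v" using e u v phi_class by simp
    then have "(u,v) \<in> \<theta>" using theta_eq u v by (simp add: K_def)
    then show "A = B" using u v equiv_class_eq[OF theta_equiv] by simp
  qed
next
  assume ne: "I \<noteq> {}"
  show "phi ` (C // \<theta>) = W"
  proof
    show "phi ` (C // \<theta>) \<subseteq> W"
    proof
      fix w assume "w \<in> phi ` (C // \<theta>)"
      then obtain A where A: "A \<in> C // \<theta>" "w = phi A" by blast
      obtain u where u: "u \<in> C" "A = \<theta> `` {u}" using A(1) by (rule quotientE)
      show "w \<in> W" using A u phi_class red_W C_L by simp
    qed
  next
    show "W \<subseteq> phi ` (C // \<theta>)"
    proof
      fix w assume w: "w \<in> W"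
      have cC: "canon w \<in> C" using canon_C[OF ne w] .
      have "red M (canon w) = w"
      proof (cases "w = []")
        case True then show ?thesis by (simp add: canon_def red_def)
      next
        case False then show ?thesis using red_id[OF w] by (simp add: canon_def)
      qed
      then have "phi (\<theta> `` {canon w}) = w" using phi_class[OF cC] by simp
      moreover have "\<theta> `` {canon w} \<in> C // \<theta>" using cC by (rule quotientI)
      ultimately show "w \<in> phi ` (C // \<theta>)" by (metis imageI)
    qed
  qed
qed

abbreviation "F \<equiv> monoid_free_prod I M"

lemma F_carrier: "carrier F = C // \<theta>" by (simp add: monoid_free_prod_def)
lemma F_mult: "mult F A B = \<theta> `` {sgm (SOME u. u \<in> A) (SOME v. v \<in> B)}" by (simp add: monoid_free_prod_def)

lemma F_cl: "\<forall>A\<in>carrier F. \<forall>B\<in>carrier F. mult F A B \<in> carrier F"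
proof (intro ballI)
  fix A B assume "A \<in> carrier F" "B \<in> carrier F"
  then have a: "(SOME u. u \<in> A) \<in> C" and b: "(SOME u. u \<in> B) \<in> C"
    using some_in_class class_sub F_carrier by auto
  show "mult F A B \<in> carrier F" unfolding F_mult F_carrier by (rule quotientI[OF sgm_C[OF a b]])
qed

lemma F_hom: "\<forall>A\<in>carrier F. \<forall>B\<in>carrier F. phi (mult F A B) = wmul M (phi A) (phi B)"
proof (intro ballI)
  fix A B assume "A \<in> carrier F" "B \<in> carrier F"
  then have a: "(SOME u. u \<in> A) \<in> C" and b: "(SOME u. u \<in> B) \<in> C"
    using some_in_class class_sub F_carrier by auto
  have "phi (mult F A B) = red M (sgm (SOME u. u \<in> A) (SOME v. v \<in> B))"
    unfolding F_mult using phi_class sgm_C[OF a b] by simp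
  also have "\<dots> = red M ((SOME u. u \<in> A) @ (SOME v. v \<in> B))" using red_sgm[OF a b] .
  also have "\<dots> = red M (red M (SOME u. u \<in> A) @ red M (SOME v. v \<in> B))"
    using red_append[OF C_L[OF a] C_L[OF b]] .
  also have "\<dots> = wmul M (phi A) (phi B)" unfolding wmul_def phi_def ..
  finally show "phi (mult F A B) = wmul M (phi A) (phi B)" .
qed

lemma FRE_F_iff: "I \<noteq> {} \<Longrightarrow> FRE F \<longleftrightarrow> fin_right_equated W (wmul M)"
proof -
  assume ne: "I \<noteq> {}"
  have "bij_betw phi (carrier F) W" unfolding F_carrier by (rule phi_bij[OF ne])
  from fre_transfer[OF this F_hom F_cl] show ?thesis by simp
qed

end


context fp begin

definition "emb i x = (if x = \<one>\<^bsub>M i\<^esub> then [] else [(i,x)])"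
definition "hb i w = (case w of [] \<Rightarrow> \<one>\<^bsub>M i\<^esub> | l # w' \<Rightarrow> if fst l = i then snd l else \<one>\<^bsub>M i\<^esub>)"
definition "rest i w = (case w of [] \<Rightarrow> [] | l # w' \<Rightarrow> if fst l = i then w' else w)"
definition "cc i l = (if fst l = i then snd l else \<one>\<^bsub>M i\<^esub>)"
definition "pi i w = foldr (\<lambda>l acc. cc i l \<otimes>\<^bsub>M i\<^esub> acc) w \<one>\<^bsub>M i\<^esub>"

lemma clW: "\<forall>x\<in>W. \<forall>y\<in>W. wmul M x y \<in> W" using wmul_W by blast
lemma asW: "\<forall>x\<in>W. \<forall>y\<in>W. \<forall>z\<in>W. wmul M (wmul M x y) z = wmul M x (wmul M y z)"
  using wmul_assoc by blast

lemma emb_W: "i \<in> I \<Longrightarrow> x \<in> carrier (M i) \<Longrightarrow> emb i x \<in> W"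
  unfolding emb_def by (auto simp: W_Cons)

lemma W_append: "u @ v \<in> W \<longleftrightarrow> u \<in> W \<and> v \<in> W \<and> (u = [] \<or> v = [] \<or> fst (last u) \<noteq> fst (hd v))"
  unfolding Wd_def mem_Collect_eq set_append ball_Un alt_append by blast

lemma wmul_emb_act: "i \<in> I \<Longrightarrow> x \<in> carrier (M i) \<Longrightarrow> w \<in> W \<Longrightarrow> wmul M (emb i x) w = act M (i,x) w"
  unfolding wmul_def emb_def using red_id act_one by (auto simp: red_def)

lemma act_emb: "i \<in> I \<Longrightarrow> x \<in> carrier (M i) \<Longrightarrow> y \<in> carrier (M i) \<Longrightarrow>
   act M (i,x) (emb i y) = emb i (x \<otimes>\<^bsub>M i\<^esub> y)"
  unfolding emb_def using ro by auto

lemma wmul_emb: "i \<in> I \<Longrightarrow> x \<in> carrier (M i) \<Longrightarrow> y \<in> carrier (M i) \<Longrightarrow>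
   wmul M (emb i x) (emb i y) = emb i (x \<otimes>\<^bsub>M i\<^esub> y)"
  using wmul_emb_act act_emb emb_W by simp

lemma decomp:
  assumes i: "i \<in> I" and w: "w \<in> W"
  shows "hb i w \<in> carrier (M i)" "rest i w \<in> W" "nohd i (rest i w)" "act M (i, hb i w) (rest i w) = w"
proof -
  have "hb i w \<in> carrier (M i) \<and> rest i w \<in> W \<and> nohd i (rest i w) \<and> act M (i, hb i w) (rest i w) = w"
  proof (cases w)
    case Nil then show ?thesis using i one_c by (simp add: hb_def rest_def)
  next
    case (Cons l w')
    obtain j b where l: "l = (j,b)" by (cases l)
    have jb: "j \<in> I" "b \<in> carrier (M j)" "b \<noteq> \<one>\<^bsub>M j\<^esub>" "w' \<in> W" "nohd j w'" using w Cons l by (auto simp: W_Cons)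
    show ?thesis
    proof (cases "j = i")
      case True
      then show ?thesis using jb Cons l act_nohd[OF jb(5), of M b] by (simp add: hb_def rest_def)
    next
      case False
      then show ?thesis using jb Cons l w act_one[OF i w] one_c[OF i] by (simp add: hb_def rest_def)
    qed
  qed
  then show "hb i w \<in> carrier (M i)" "rest i w \<in> W" "nohd i (rest i w)" "act M (i, hb i w) (rest i w) = w"
    by auto
qed

lemma act_inj:
  assumes "nohd i r" "nohd i r'" "act M (i,c) r = act M (i,c') r'"
  shows "c = c' \<and> r = r'"
proof -
  have e: "(if c = \<one>\<^bsub>M i\<^esub> then r else (i,c)#r) = (if c' = \<one>\<^bsub>M i\<^esub> then r' else (i,c')#r')"
    using assms act_nohd by metis
  show ?thesis
  proof (cases "c = \<one>\<^bsub>M i\<^esub>"; cases "c' = \<one>\<^bsub>M i\<^esub>")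
  qed (use e assms(1,2) in \<open>auto simp: nohd_def\<close>)
qed

lemma ann_W_Nil: "right_annihilator W (wmul M) [] = Id_on W"
  unfolding right_annihilator_def Id_on_def using wmul_Nil by auto

lemma ann_emb:
  assumes i: "i \<in> I" and x: "x \<in> carrier (M i)" and X: "X \<subseteq> carrier (M i) \<times> carrier (M i)"
    and gen: "right_cong_gen (carrier (M i)) (mult (M i)) X = right_annihilator (carrier (M i)) (mult (M i)) x"
  shows "right_cong_gen W (wmul M) ((\<lambda>(u,v). (emb i u, emb i v)) ` X) = right_annihilator W (wmul M) (emb i x)"
proof
  let ?EX = "(\<lambda>(u,v). (emb i u, emb i v)) ` X"
  have "?EX \<subseteq> right_annihilator W (wmul M) (emb i x)"
  proof
    fix q assume "q \<in> ?EX"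
    then obtain u v where q: "q = (emb i u, emb i v)" "(u,v) \<in> X" by auto
    then have "(u,v) \<in> right_annihilator (carrier (M i)) (mult (M i)) x" using gen rcg_upper by blast
    then have uv: "u \<in> carrier (M i)" "v \<in> carrier (M i)" "x \<otimes>\<^bsub>M i\<^esub> u = x \<otimes>\<^bsub>M i\<^esub> v"
      unfolding right_annihilator_def by auto
    then show "q \<in> right_annihilator W (wmul M) (emb i x)"
      unfolding right_annihilator_def using q wmul_emb[OF i x] emb_W[OF i] by auto
  qed
  then show "right_cong_gen W (wmul M) ?EX \<subseteq> right_annihilator W (wmul M) (emb i x)"
    by (rule rcg_least[OF ann_rc[OF clW asW emb_W[OF i x]]])
next
  let ?EX = "(\<lambda>(u,v). (emb i u, emb i v)) ` X"
  let ?R = "right_cong_gen W (wmul M) ?EX"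
  have EXW: "?EX \<subseteq> W \<times> W" using X emb_W[OF i] by auto
  have rcR: "right_congruence W (wmul M) ?R" using rcg_rc[OF clW EXW] .
  let ?S = "{(u,v). u \<in> carrier (M i) \<and> v \<in> carrier (M i) \<and> (emb i u, emb i v) \<in> ?R}"
  have rcS: "right_congruence (carrier (M i)) (mult (M i)) ?S"
    apply (rule rc_preimage[OF rcR])
    using emb_W[OF i] wmul_emb[OF i] mc[OF i] by auto
  have "X \<subseteq> ?S" using X rcg_upper[of ?EX W "wmul M"] by auto
  then have XS: "right_annihilator (carrier (M i)) (mult (M i)) x \<subseteq> ?S"
    using rcg_least[OF rcS] gen by blast
  show "right_annihilator W (wmul M) (emb i x) \<subseteq> ?R"
  proof
    fix q assume "q \<in> right_annihilator W (wmul M) (emb i x)"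
    then obtain s t where st: "q = (s,t)" "s \<in> W" "t \<in> W" "act M (i,x) s = act M (i,x) t"
      unfolding right_annihilator_def using wmul_emb_act[OF i x] by auto
    note ds = decomp[OF i st(2)] and dt = decomp[OF i st(3)]
    have "act M (i, x \<otimes>\<^bsub>M i\<^esub> hb i s) (rest i s) = act M (i, x \<otimes>\<^bsub>M i\<^esub> hb i t) (rest i t)"
      using act_act[OF i x ds(1) ds(2)] act_act[OF i x dt(1) dt(2)] ds(4) dt(4) st(4) by simp
    then have e: "x \<otimes>\<^bsub>M i\<^esub> hb i s = x \<otimes>\<^bsub>M i\<^esub> hb i t" "rest i s = rest i t"
      using act_inj[OF ds(3) dt(3)] by auto
    then have "(hb i s, hb i t) \<in> right_annihilator (carrier (M i)) (mult (M i)) x"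
      unfolding right_annihilator_def using ds(1) dt(1) by auto
    then have "(emb i (hb i s), emb i (hb i t)) \<in> ?R" using XS by auto
    then have "(wmul M (emb i (hb i s)) (rest i s), wmul M (emb i (hb i t)) (rest i s)) \<in> ?R"
      using rc_props(5)[OF rcR] ds(2) by blast
    moreover have "wmul M (emb i (hb i s)) (rest i s) = s" using wmul_emb_act[OF i ds(1) ds(2)] ds(4) by simp
    moreover have "wmul M (emb i (hb i t)) (rest i s) = t" using wmul_emb_act[OF i dt(1) dt(2)] dt(4) e(2) by simp
    ultimately show "q \<in> ?R" using st(1) by simp
  qed
qed

lemma caseA:
  assumes a: "p @ [(i,x)] \<in> W" and nr: "\<forall>b\<in>carrier (M i). x \<otimes>\<^bsub>M i\<^esub> b \<noteq> \<one>\<^bsub>M i\<^esub>"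
  shows "right_annihilator W (wmul M) (p @ [(i,x)]) = right_annihilator W (wmul M) (emb i x)"
proof -
  have pW: "p \<in> W" and ix: "i \<in> I" "x \<in> carrier (M i)" "x \<noteq> \<one>\<^bsub>M i\<^esub>" and pl: "p = [] \<or> fst (last p) \<noteq> i"
    using a by (auto simp: W_append W_Cons)
  have key: "\<And>s. s \<in> W \<Longrightarrow> wmul M (p @ [(i,x)]) s = p @ wmul M (emb i x) s"
  proof -
    fix s assume s: "s \<in> W"
    note ds = decomp[OF ix(1) s]
    have c: "x \<otimes>\<^bsub>M i\<^esub> hb i s \<in> carrier (M i)" using mc[OF ix(1,2) ds(1)] .
    have ne: "x \<otimes>\<^bsub>M i\<^esub> hb i s \<noteq> \<one>\<^bsub>M i\<^esub>" using nr ds(1) by blast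
    have "wmul M (emb i x) s = act M (i,x) s" using wmul_emb_act[OF ix(1,2) s] .
    also have "\<dots> = act M (i, x \<otimes>\<^bsub>M i\<^esub> hb i s) (rest i s)"
      using act_act[OF ix(1,2) ds(1) ds(2)] ds(4) by simp
    also have "\<dots> = (i, x \<otimes>\<^bsub>M i\<^esub> hb i s) # rest i s" using act_nohd[OF ds(3), of M "x \<otimes>\<^bsub>M i\<^esub> hb i s"] ne by simp
    finally have e1: "wmul M (emb i x) s = (i, x \<otimes>\<^bsub>M i\<^esub> hb i s) # rest i s" .
    have w1: "(i, x \<otimes>\<^bsub>M i\<^esub> hb i s) # rest i s \<in> W" using ix c ne ds by (simp add: W_Cons)
    have w2: "p @ ((i, x \<otimes>\<^bsub>M i\<^esub> hb i s) # rest i s) \<in> W" using W_append pW w1 pl by auto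
    have "wmul M (p @ [(i,x)]) s = foldr (act M) p (act M (i,x) s)"
      unfolding wmul_def red_def using red_id[OF s] by (simp add: red_def)
    also have "act M (i,x) s = (i, x \<otimes>\<^bsub>M i\<^esub> hb i s) # rest i s"
      using e1 wmul_emb_act[OF ix(1,2) s] by simp
    also have "foldr (act M) p ((i, x \<otimes>\<^bsub>M i\<^esub> hb i s) # rest i s) = red M (p @ ((i, x \<otimes>\<^bsub>M i\<^esub> hb i s) # rest i s))"
      using red_id[OF w1] by (simp add: red_def)
    also have "\<dots> = p @ ((i, x \<otimes>\<^bsub>M i\<^esub> hb i s) # rest i s)" using red_id[OF w2] .
    finally show "wmul M (p @ [(i,x)]) s = p @ wmul M (emb i x) s" using e1 by simp
  qed
  show ?thesis unfolding right_annihilator_def using key by auto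
qed

end


context fp begin

lemma cc_c: "i \<in> I \<Longrightarrow> l \<in> L \<Longrightarrow> cc i l \<in> carrier (M i)"
  unfolding cc_def Ld_def using one_c by auto

lemma pi_Cons: "pi i (l # w) = cc i l \<otimes>\<^bsub>M i\<^esub> pi i w" unfolding pi_def by simp
lemma pi_Nil: "pi i [] = \<one>\<^bsub>M i\<^esub>" unfolding pi_def by simp

lemma pi_c: "i \<in> I \<Longrightarrow> set w \<subseteq> L \<Longrightarrow> pi i w \<in> carrier (M i)"
  by (induction w) (auto simp: pi_Cons pi_Nil one_c cc_c mc)

lemma pi_append: "i \<in> I \<Longrightarrow> set u \<subseteq> L \<Longrightarrow> set v \<subseteq> L \<Longrightarrow> pi i (u @ v) = pi i u \<otimes>\<^bsub>M i\<^esub> pi i v"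
proof (induction u)
  case Nil then show ?case using lo pi_c by (simp add: pi_Nil)
next
  case (Cons l u)
  then show ?case using ma[OF Cons.prems(1) cc_c pi_c pi_c] by (simp add: pi_Cons)
qed

lemma pi_act:
  assumes i: "i \<in> I" and l: "l \<in> L" and w: "w \<in> W"
  shows "pi i (act M l w) = pi i (l # w)"
proof -
  obtain j m where lm: "l = (j,m)" "j \<in> I" "m \<in> carrier (M j)" using l by (auto simp: Ld_def)
  have pw: "pi i w \<in> carrier (M i)" using pi_c[OF i W_L[OF w]] .
  show ?thesis
  proof (cases w)
    case Nil
    then show ?thesis using lm one_c[OF i] lo[OF i] ro[OF i] by (auto simp: pi_Cons pi_Nil cc_def)
  next
    case (Cons l' w')
    obtain k b where l': "l' = (k,b)" by (cases l')
    have kb: "k \<in> I" "b \<in> carrier (M k)" "w' \<in> W" using w Cons l' by (auto simp: W_Cons)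
    have pw': "pi i w' \<in> carrier (M i)" using pi_c[OF i W_L[OF kb(3)]] .
    show ?thesis
    proof (cases "k = j")
      case True
      have A: "cc i (j, m \<otimes>\<^bsub>M j\<^esub> b) \<otimes>\<^bsub>M i\<^esub> pi i w' = cc i (j,m) \<otimes>\<^bsub>M i\<^esub> (cc i (j,b) \<otimes>\<^bsub>M i\<^esub> pi i w')"
      proof (cases "j = i")
        case True
        then show ?thesis using ma[OF i _ _ pw'] lm kb \<open>k = j\<close> by (simp add: cc_def)
      next
        case False
        then show ?thesis using lo[OF i] one_c[OF i] pw' by (simp add: cc_def)
      qed
      show ?thesis
      proof (cases "m \<otimes>\<^bsub>M j\<^esub> b = \<one>\<^bsub>M j\<^esub>")
        case T2: True
        have "cc i (j, m \<otimes>\<^bsub>M j\<^esub> b) \<otimes>\<^bsub>M i\<^esub> pi i w' = pi i w'"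
          using T2 lo[OF i pw'] by (simp add: cc_def)
        then show ?thesis using A T2 True Cons l' lm by (simp add: pi_Cons)
      next
        case F2: False
        then show ?thesis using A True Cons l' lm by (simp add: pi_Cons)
      qed
    next
      case False
      show ?thesis
      proof (cases "m = \<one>\<^bsub>M j\<^esub>")
        case True
        have "cc i (j, m) \<otimes>\<^bsub>M i\<^esub> pi i w = pi i w" using True lo[OF i pw] by (simp add: cc_def)
        then show ?thesis using True False Cons l' lm by (simp add: pi_Cons)
      next
        case F2: False
        then show ?thesis using False Cons l' lm by (simp add: pi_Cons)
      qed
    qed
  qed
qed

lemma pi_red: "i \<in> I \<Longrightarrow> set u \<subseteq> L \<Longrightarrow> pi i (red M u) = pi i u"
proof (induction u)
  case Nil then show ?case by (simp add: red_def)
next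
  case (Cons l u)
  have "pi i (red M (l # u)) = pi i (act M l (red M u))" by (simp add: red_def)
  also have "\<dots> = cc i l \<otimes>\<^bsub>M i\<^esub> pi i (red M u)" using pi_act[OF Cons.prems(1) _ red_W] Cons.prems
    by (simp add: pi_Cons)
  also have "\<dots> = pi i (l # u)" using Cons by (simp add: pi_Cons)
  finally show ?case .
qed

lemma pi_wmul: "i \<in> I \<Longrightarrow> u \<in> W \<Longrightarrow> v \<in> W \<Longrightarrow> pi i (wmul M u v) = pi i u \<otimes>\<^bsub>M i\<^esub> pi i v"
  unfolding wmul_def using pi_red pi_append W_L by simp

lemma pi_emb: "i \<in> I \<Longrightarrow> x \<in> carrier (M i) \<Longrightarrow> pi i (emb i x) = x"
  unfolding emb_def using ro by (simp add: pi_Cons pi_Nil cc_def)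

lemma mi_cl: "i \<in> I \<Longrightarrow> \<forall>x\<in>carrier (M i). \<forall>y\<in>carrier (M i). x \<otimes>\<^bsub>M i\<^esub> y \<in> carrier (M i)"
  using mc by blast
lemma mi_as: "i \<in> I \<Longrightarrow> \<forall>x\<in>carrier (M i). \<forall>y\<in>carrier (M i). \<forall>z\<in>carrier (M i).
    x \<otimes>\<^bsub>M i\<^esub> y \<otimes>\<^bsub>M i\<^esub> z = x \<otimes>\<^bsub>M i\<^esub> (y \<otimes>\<^bsub>M i\<^esub> z)"
  using ma by blast

lemma W_to_factor:
  assumes FW: "fin_right_equated W (wmul M)" and i: "i \<in> I"
  shows "FRE (M i)"
  unfolding fin_right_equated_def
proof
  fix x assume x: "x \<in> carrier (M i)"
  obtain X where X: "finite X" "X \<subseteq> W \<times> W" "right_cong_gen W (wmul M) X = right_annihilator W (wmul M) (emb i x)"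
    using FW emb_W[OF i x] unfolding fin_right_equated_def by blast
  let ?PX = "(\<lambda>(u,v). (pi i u, pi i v)) ` X"
  have PXc: "?PX \<subseteq> carrier (M i) \<times> carrier (M i)" using X(2) pi_c[OF i] W_L by fastforce
  have 1: "right_cong_gen (carrier (M i)) (mult (M i)) ?PX \<subseteq> right_annihilator (carrier (M i)) (mult (M i)) x"
  proof (rule rcg_least[OF ann_rc[OF mi_cl[OF i] mi_as[OF i] x]])
    show "?PX \<subseteq> right_annihilator (carrier (M i)) (mult (M i)) x"
    proof
      fix q assume "q \<in> ?PX"
      then obtain u v where q: "q = (pi i u, pi i v)" "(u,v) \<in> X" by auto
      then have "(u,v) \<in> right_annihilator W (wmul M) (emb i x)" using X(3) rcg_upper by blast
      then have uv: "u \<in> W" "v \<in> W" "wmul M (emb i x) u = wmul M (emb i x) v"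
        unfolding right_annihilator_def by auto
      have "x \<otimes>\<^bsub>M i\<^esub> pi i u = pi i (wmul M (emb i x) u)" using pi_wmul[OF i emb_W[OF i x] uv(1)] pi_emb[OF i x] by simp
      also have "\<dots> = x \<otimes>\<^bsub>M i\<^esub> pi i v" using uv(3) pi_wmul[OF i emb_W[OF i x] uv(2)] pi_emb[OF i x] by simp
      finally show "q \<in> right_annihilator (carrier (M i)) (mult (M i)) x"
        unfolding right_annihilator_def using q pi_c[OF i] W_L uv by auto
    qed
  qed
  let ?R = "right_cong_gen (carrier (M i)) (mult (M i)) ?PX"
  have rcR: "right_congruence (carrier (M i)) (mult (M i)) ?R" using rcg_rc[OF mi_cl[OF i] PXc] .
  let ?S = "{(u,v). u \<in> W \<and> v \<in> W \<and> (pi i u, pi i v) \<in> ?R}"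
  have rcS: "right_congruence W (wmul M) ?S"
  proof -
    have h1: "\<forall>x\<in>W. pi i x \<in> carrier (M i)" by (simp add: pi_c[OF i W_L])
    have h2: "\<forall>x\<in>W. \<forall>y\<in>W. pi i (wmul M x y) = pi i x \<otimes>\<^bsub>M i\<^esub> pi i y" by (simp add: pi_wmul[OF i])
    show ?thesis by (rule rc_preimage[OF rcR h1 h2 clW])
  qed
  have "X \<subseteq> ?S" using X(2) rcg_upper[of ?PX "carrier (M i)" "mult (M i)"] by auto
  then have XS: "right_annihilator W (wmul M) (emb i x) \<subseteq> ?S" using rcg_least[OF rcS \<open>X \<subseteq> ?S\<close>] X(3) by simp
  have 2: "right_annihilator (carrier (M i)) (mult (M i)) x \<subseteq> ?R"
  proof
    fix q assume "q \<in> right_annihilator (carrier (M i)) (mult (M i)) x"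
    then obtain s t where st: "q = (s,t)" "s \<in> carrier (M i)" "t \<in> carrier (M i)" "x \<otimes>\<^bsub>M i\<^esub> s = x \<otimes>\<^bsub>M i\<^esub> t"
      unfolding right_annihilator_def by auto
    have "(emb i s, emb i t) \<in> right_annihilator W (wmul M) (emb i x)"
      unfolding right_annihilator_def using wmul_emb[OF i x] st emb_W[OF i] by auto
    then have "(pi i (emb i s), pi i (emb i t)) \<in> ?R" using XS by auto
    then show "q \<in> ?R" using pi_emb[OF i] st by simp
  qed
  show "\<exists>X. finite X \<and> X \<subseteq> carrier (M i) \<times> carrier (M i) \<and>
         right_cong_gen (carrier (M i)) (mult (M i)) X = right_annihilator (carrier (M i)) (mult (M i)) x"
  proof (intro exI[of _ ?PX] conjI)
    show "right_cong_gen (carrier (M i)) (mult (M i)) ?PX = right_annihilator (carrier (M i)) (mult (M i)) x"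
      using 1 2 by (rule equalityI)
  qed (use PXc X(1) in auto)
qed

lemma factor_to_W:
  assumes FM: "\<forall>i\<in>I. FRE (M i)"
  shows "fin_right_equated W (wmul M)"
proof -
  have "\<forall>a. a \<in> W \<longrightarrow> (\<exists>X. finite X \<and> X \<subseteq> W \<times> W \<and> right_cong_gen W (wmul M) X = right_annihilator W (wmul M) a)"
  proof (intro allI)
    fix a show "a \<in> W \<longrightarrow> (\<exists>X. finite X \<and> X \<subseteq> W \<times> W \<and> right_cong_gen W (wmul M) X = right_annihilator W (wmul M) a)"
    proof (induction a rule: rev_induct)
      case Nil
      show ?case
        apply (intro impI exI[of _ "{}"])
        using rcg_empty[OF clW] ann_W_Nil by simp
    next
      case (snoc l p)
      obtain i x where l: "l = (i,x)" by (cases l)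
      show ?case
      proof
        assume a: "p @ [l] \<in> W"
        have pW: "p \<in> W" and ix: "i \<in> I" "x \<in> carrier (M i)" "x \<noteq> \<one>\<^bsub>M i\<^esub>"
          using a l by (auto simp: W_append W_Cons)
        obtain X where X: "finite X" "X \<subseteq> carrier (M i) \<times> carrier (M i)"
          "right_cong_gen (carrier (M i)) (mult (M i)) X = right_annihilator (carrier (M i)) (mult (M i)) x"
        proof -
          have "FRE (M i)" using FM ix(1) by simp
          then have "\<exists>X. finite X \<and> X \<subseteq> carrier (M i) \<times> carrier (M i) \<and>
             right_cong_gen (carrier (M i)) (mult (M i)) X = right_annihilator (carrier (M i)) (mult (M i)) x"
            using ix(2) unfolding fin_right_equated_def by simp
          then show ?thesis using that by blast
        qed
        let ?Z = "(\<lambda>(u,v). (emb i u, emb i v)) ` X"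
        have Z: "finite ?Z" "?Z \<subseteq> W \<times> W"
          "right_cong_gen W (wmul M) ?Z = right_annihilator W (wmul M) (emb i x)"
        proof -
          show "finite ?Z" using X(1) by simp
          show "?Z \<subseteq> W \<times> W" using X(2) emb_W[OF ix(1)] by auto
          show "right_cong_gen W (wmul M) ?Z = right_annihilator W (wmul M) (emb i x)"
            by (rule ann_emb[OF ix(1,2) X(2,3)])
        qed
        have embx: "emb i x = [(i,x)]" using ix(3) by (simp add: emb_def)
        show "\<exists>X. finite X \<and> X \<subseteq> W \<times> W \<and> right_cong_gen W (wmul M) X = right_annihilator W (wmul M) (p @ [l])"
        proof (cases "\<exists>b\<in>carrier (M i). x \<otimes>\<^bsub>M i\<^esub> b = \<one>\<^bsub>M i\<^esub>")
          case True
          then obtain b0 where b0: "b0 \<in> carrier (M i)" "x \<otimes>\<^bsub>M i\<^esub> b0 = \<one>\<^bsub>M i\<^esub>" by blast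
          obtain Y where Y: "finite Y" "Y \<subseteq> W \<times> W" "right_cong_gen W (wmul M) Y = right_annihilator W (wmul M) p"
          proof -
            have "\<exists>X. finite X \<and> X \<subseteq> W \<times> W \<and> right_cong_gen W (wmul M) X = right_annihilator W (wmul M) p"
              using snoc.IH pW by simp
            then show ?thesis using that by blast
          qed
          have e: "wmul M p (emb i x) = p @ [l]" using red_id[OF a] embx l by (simp add: wmul_def)
          have xb: "wmul M (emb i x) (emb i b0) = []" using wmul_emb[OF ix(1,2) b0(1)] b0(2) by (simp add: emb_def)
          have eN: "\<forall>y\<in>W. wmul M [] y = y" using wmul_Nil by blast
          have B: "right_cong_gen W (wmul M) (?Z \<union> (\<lambda>(y1,y2). (wmul M (emb i b0) y1, wmul M (emb i b0) y2)) ` Y)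
              = right_annihilator W (wmul M) (wmul M p (emb i x))"
            by (rule caseB[OF clW asW W_Nil eN pW emb_W[OF ix(1,2)] emb_W[OF ix(1) b0(1)] xb Y(2,3) Z(2,3)])
          show ?thesis
            apply (rule exI[of _ "?Z \<union> (\<lambda>(y1,y2). (wmul M (emb i b0) y1, wmul M (emb i b0) y2)) ` Y"])
            using B e Z Y clW emb_W[OF ix(1) b0(1)] by auto
        next
          case False
          then have "right_annihilator W (wmul M) (p @ [(i,x)]) = right_annihilator W (wmul M) (emb i x)"
            using caseA[of p i x] a l by blast
          then show ?thesis using Z l by metis
        qed
      qed
    qed
  qed
  then show ?thesis unfolding fin_right_equated_def by blast
qed

end

theorem mainTheorem6:
  fixes I :: "'i set" and M :: "'i \<Rightarrow> ('a, 'b) monoid_scheme"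
  assumes "\<And>i. i \<in> I \<Longrightarrow> monoid (M i)"
  shows "FRE (monoid_free_prod I M) \<longleftrightarrow> (\<forall>i \<in> I. FRE (M i))"
proof -
  interpret fp I M by (simp add: fp_def assms)
  show ?thesis
  proof (cases "I = {}")
    case True
    have "sg_free_prod_carrier I M = {}" using True by (auto simp: C_iff Ld_def)
    then have "carrier (monoid_free_prod I M) = {}" by (simp add: monoid_free_prod_def)
    then show ?thesis using True unfolding fin_right_equated_def by simp
  next
    case False
    then show ?thesis using FRE_F_iff W_to_factor factor_to_W by blast
  qed
qed



end
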